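(* Let $T>0$, $\lambda>0$, $\phi,\varrho\ge0$, $G\in\mathcal G$. Then $\sup_{t\le T}\|\Gamma_t^{-1}\|_{\rm op}<\infty$.
   Context: $\mathcal G$: nonnegative definite Volterra kernels $G:[0,T]^2\to[0,\infty)$ ($G(t,s)=0$ for $s\ge t$; $\int\int(G(t,s)+G(s,t))f(s)f(t)\ge0$ for all $f\in L^2([0,T],\mathbb R)$) with $\sup_t\int_0^T|G(t,s)|^2ds+\sup_s\int_0^T|G(t,s)|^2dt<\infty$ and $\lim_{h\to0}\int_0^T|G(t+h,s)-G(t,s)|^2ds=0$ for each $t$. $\tilde G(t,s)=2\varrho\mathbb 1_{\{s<t\}}+G(t,s)$. On $L^2([0,T],\mathbb R)$: $\tilde{\mathbf G}_t$ has kernel $\tilde G(s,u)\mathbb 1_{\{u\ge t\}}$, $\mathbf 1_t$ has kernel $(u,s)\mapsto\mathbb 1_{\{u\ge s\}}\mathbb 1_{\{s\ge t\}}$, $\mathbf D_t=2\lambda{\rm id}+\tilde{\mathbf G}_t+\tilde{\mathbf G}_t^*+2\phi\mathbf 1_t^*\mathbf 1_t$ (invertible). $\Gamma_t^{-1}$ is the operator on $L^2([0,T],\mathbb R^2)$ with block form $\begin{pmatrix}\mathbf D_t^{-1}&-2\phi\mathbf D_t^{-1}\mathbf 1_t^*\\-2\phi\mathbf 1_t\mathbf D_t^{-1}&-2\phi{\rm id}+4\phi^2\mathbf 1_t\mathbf D_t^{-1}\mathbf 1_t^*\end{pmatrix}$. $\|\cdot\|_{\rm op}$ is the operator norm on $L^2([0,T],\mathbb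 R^2)$. *)

theory Defs
  imports "HOL-Analysis.Analysis"
begin

text \<open>Functions on [0,T] are represented as total functions real => real; only their
values on [0,T] matter. All integrals are Lebesgue integrals over [0,T].\<close>

abbreviation LT :: "real \<Rightarrow> real measure" where
  "LT T \<equiv> lebesgue_on {0..T}"

definition L2T :: "real \<Rightarrow> (real \<Rightarrow> real) \<Rightarrow> bool" where
  "L2T T f \<longleftrightarrow> f \<in> borel_measurable (LT T) \<and> integrable (LT T) (\<lambda>s. (f s)\<^sup>2)"

definition kernel_class :: "real \<Rightarrow> (real \<Rightarrow> real \<Rightarrow> real) \<Rightarrow> bool" where
  "kernel_class T G \<longleftrightarrow>
     (\<lambda>(t,s). G t s) \<in> borel_measurable (lebesgue_on ({0..T} \<times> {0..T}))
   \<and> (\<forall>t\<in>{0..T}. \<forall>s\<in>{0..T}. G t s \<ge> 0)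
   \<and> (\<forall>t\<in>{0..T}. \<forall>s\<in>{0..T}. s \<ge> t \<longrightarrow> G t s = 0)
   \<and> (\<forall>f. L2T T f \<longrightarrow>
        (\<integral>t. (\<integral>s. (G t s + G s t) * f s * f t \<partial>LT T) \<partial>LT T) \<ge> 0)
   \<and> (SUP t\<in>{0..T}. \<integral>\<^sup>+ s. ennreal ((G t s)\<^sup>2) \<partial>LT T)
       + (SUP s\<in>{0..T}. \<integral>\<^sup>+ t. ennreal ((G t s)\<^sup>2) \<partial>LT T) < \<infinity>
   \<and> (\<forall>t\<in>{0..T}. ((\<lambda>h. \<integral>\<^sup>+ s. ennreal ((G (t + h) s - G t s)\<^sup>2) \<partial>LT T) \<longlongrightarrow> 0)
                    (at 0 within {h. t + h \<in> {0..T}}))"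

definition Gtilde :: "real \<Rightarrow> (real \<Rightarrow> real \<Rightarrow> real) \<Rightarrow> real \<Rightarrow> real \<Rightarrow> real" where
  "Gtilde \<rho> G t s = 2 * \<rho> * (if s < t then 1 else 0) + G t s"

definition kop :: "real \<Rightarrow> (real \<Rightarrow> real \<Rightarrow> real) \<Rightarrow> (real \<Rightarrow> real) \<Rightarrow> real \<Rightarrow> real" where
  "kop T K f = (\<lambda>s. \<integral>u. K s u * f u \<partial>LT T)"

text \<open>Kernel of tilde G_t: (s,u) |-> tilde G(s,u) 1_{u >= t}; adjoint kernel is transposed.\<close>
definition Gt_ker :: "real \<Rightarrow> (real \<Rightarrow> real \<Rightarrow> real) \<Rightarrow> real \<Rightarrow> real \<Rightarrow> real \<Rightarrow> real" where
  "Gt_ker \<rho> G t s u = Gtilde \<rho> G s u * (if u \<ge> t then 1 else 0)"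

definition one_ker :: "real \<Rightarrow> real \<Rightarrow> real \<Rightarrow> real" where
  "one_ker t u s = (if u \<ge> s \<and> s \<ge> t then 1 else 0)"

definition one_op :: "real \<Rightarrow> real \<Rightarrow> (real \<Rightarrow> real) \<Rightarrow> real \<Rightarrow> real" where
  "one_op T t = kop T (one_ker t)"

definition one_adj :: "real \<Rightarrow> real \<Rightarrow> (real \<Rightarrow> real) \<Rightarrow> real \<Rightarrow> real" where
  "one_adj T t = kop T (\<lambda>s u. one_ker t u s)"

definition D_op :: "real \<Rightarrow> real \<Rightarrow> real \<Rightarrow> real \<Rightarrow> (real \<Rightarrow> real \<Rightarrow> real) \<Rightarrow> real
                     \<Rightarrow> (real \<Rightarrow> real) \<Rightarrow> real \<Rightarrow> real" where
  "D_op T lam \<phi> \<rho> G t f = (\<lambda>s. 2 * lam * f s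
      + kop T (Gt_ker \<rho> G t) f s
      + kop T (\<lambda>s u. Gt_ker \<rho> G t u s) f s
      + 2 * \<phi> * one_adj T t (one_op T t f) s)"

text \<open>Inverse of D_t on L^2([0,T]) (elements of L^2 identified up to a.e. equality).\<close>
definition D_inv :: "real \<Rightarrow> real \<Rightarrow> real \<Rightarrow> real \<Rightarrow> (real \<Rightarrow> real \<Rightarrow> real) \<Rightarrow> real
                     \<Rightarrow> (real \<Rightarrow> real) \<Rightarrow> real \<Rightarrow> real" where
  "D_inv T lam \<phi> \<rho> G t f =
     (SOME g. L2T T g \<and> (AE s in LT T. D_op T lam \<phi> \<rho> G t g s = f s))"

text \<open>Gamma_t^{-1} on L^2([0,T],R^2), given by its block form.\<close>
definition Gamma_inv :: "real \<Rightarrow> real \<Rightarrow> real \<Rightarrow> real \<Rightarrow> (real \<Rightarrow> real \<Rightarrow> real) \<Rightarrow> real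
     \<Rightarrow> (real \<Rightarrow> real) \<times> (real \<Rightarrow> real) \<Rightarrow> (real \<Rightarrow> real) \<times> (real \<Rightarrow> real)" where
  "Gamma_inv T lam \<phi> \<rho> G t fg =
    (let f1 = fst fg; f2 = snd fg; Di = D_inv T lam \<phi> \<rho> G t in
     (\<lambda>s. Di f1 s - 2 * \<phi> * Di (one_adj T t f2) s,
      \<lambda>s. - 2 * \<phi> * one_op T t (Di f1) s
          + (- 2 * \<phi> * f2 s + 4 * \<phi>\<^sup>2 * one_op T t (Di (one_adj T t f2)) s)))"

definition L2norm2 :: "real \<Rightarrow> (real \<Rightarrow> real) \<times> (real \<Rightarrow> real) \<Rightarrow> real" where
  "L2norm2 T fg = sqrt ((\<integral>s. (fst fg s)\<^sup>2 \<partial>LT T) + (\<integral>s. (snd fg s)\<^sup>2 \<partial>LT T))"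

definition op_norm2 :: "real \<Rightarrow> ((real \<Rightarrow> real) \<times> (real \<Rightarrow> real) \<Rightarrow> (real \<Rightarrow> real) \<times> (real \<Rightarrow> real))
                        \<Rightarrow> ennreal" where
  "op_norm2 T A = (SUP fg \<in> {fg. L2T T (fst fg) \<and> L2T T (snd fg) \<and> L2norm2 T fg \<le> 1}.
                      ennreal (L2norm2 T (A fg)))"

end

theory Submission
  imports Defs
begin

definition nrm :: "real \<Rightarrow> (real \<Rightarrow> real) \<Rightarrow> real" where
  "nrm T f = sqrt (\<integral>s. (f s)\<^sup>2 \<partial>LT T)"

lemma space_LT[simp]: "space (LT T) = {0..T}"
  by (simp add: space_restrict_space)

lemma emeasure_LT: "T \<ge> 0 \<Longrightarrow> emeasure (LT T) {0..T} = ennreal T"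
  by (simp add: emeasure_restrict_space emeasure_lborel_Icc)

lemma finite_LT: "T \<ge> 0 \<Longrightarrow> finite_measure (LT T)"
  by (rule finite_measureI) (simp add: emeasure_LT)

lemma measure_LT: "T \<ge> 0 \<Longrightarrow> measure (LT T) {0..T} = T"
  by (simp add: measure_def emeasure_LT)

lemma L2T_meas[measurable_dest]: "L2T T f \<Longrightarrow> f \<in> borel_measurable (LT T)"
  by (simp add: L2T_def)

lemma L2T_sq: "L2T T f \<Longrightarrow> integrable (LT T) (\<lambda>s. (f s)\<^sup>2)"
  by (simp add: L2T_def)

lemma L2T_integrable: "T \<ge> 0 \<Longrightarrow> L2T T f \<Longrightarrow> integrable (LT T) f"
  using finite_measure.square_integrable_imp_integrable[OF finite_LT] by (auto simp: L2T_def)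

lemma L2T_mult_integrable:
  assumes "L2T T f" "L2T T g" shows "integrable (LT T) (\<lambda>s. f s * g s)"
proof (rule Bochner_Integration.integrable_bound)
  show "integrable (LT T) (\<lambda>s. (f s)\<^sup>2 + (g s)\<^sup>2)" using assms by (auto simp: L2T_def)
  show "(\<lambda>s. f s * g s) \<in> borel_measurable (LT T)" using assms by (auto simp: L2T_def)
  show "AE x in LT T. norm (f x * g x) \<le> norm ((f x)\<^sup>2 + (g x)\<^sup>2)"
  proof (rule AE_I2)
    fix x
    have e: "(\<bar>f x\<bar> - \<bar>g x\<bar>)\<^sup>2 = (f x)\<^sup>2 + (g x)\<^sup>2 - 2 * \<bar>f x\<bar> * \<bar>g x\<bar>"
      by (simp add: power2_diff)
    have "0 \<le> (\<bar>f x\<bar> - \<bar>g x\<bar>)\<^sup>2" by simp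
    then have "2 * \<bar>f x\<bar> * \<bar>g x\<bar> \<le> (f x)\<^sup>2 + (g x)\<^sup>2" unfolding e by simp
    moreover have "\<bar>f x\<bar> * \<bar>g x\<bar> \<ge> 0" by simp
    moreover have "norm (f x * g x) = \<bar>f x\<bar> * \<bar>g x\<bar>" by (simp add: abs_mult)
    moreover have "norm ((f x)\<^sup>2 + (g x)\<^sup>2) = (f x)\<^sup>2 + (g x)\<^sup>2" by simp
    ultimately show "norm (f x * g x) \<le> norm ((f x)\<^sup>2 + (g x)\<^sup>2)"
      by linarith
  qed
qed

lemma L2T_add: 
  assumes "L2T T f" "L2T T g" shows "L2T T (\<lambda>s. f s + g s)"
proof -
  have e: "(\<lambda>s. (f s + g s)\<^sup>2) = (\<lambda>s. (f s)\<^sup>2 + (g s)\<^sup>2 + 2 * (f s * g s))"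
    by (auto simp: power2_sum)
  show ?thesis unfolding L2T_def e
    using L2T_mult_integrable[OF assms] assms by (auto simp: L2T_def)
qed

lemma L2T_scale: "L2T T f \<Longrightarrow> L2T T (\<lambda>s. c * f s)"
  unfolding L2T_def power_mult_distrib by auto

lemma L2T_uminus: "L2T T f \<Longrightarrow> L2T T (\<lambda>s. - f s)"
  unfolding L2T_def by auto

lemma L2T_diff: "L2T T f \<Longrightarrow> L2T T g \<Longrightarrow> L2T T (\<lambda>s. f s - g s)"
  using L2T_add[of T f "\<lambda>s. - g s"] L2T_uminus[of T g] by simp

lemma L2T_zero: "L2T T (\<lambda>s. 0)"
  unfolding L2T_def by auto

lemma L2T_abs: "L2T T f \<Longrightarrow> L2T T (\<lambda>s. \<bar>f s\<bar>)"
  unfolding L2T_def by auto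

lemma L2T_sum: "(\<And>i. i \<in> I \<Longrightarrow> L2T T (f i)) \<Longrightarrow> L2T T (\<lambda>s. \<Sum>i\<in>I. f i s)"
proof (induction I rule: infinite_finite_induct)
  case (infinite A) then show ?case by (simp add: L2T_zero)
next
  case empty then show ?case by (simp add: L2T_zero)
next
  case (insert x F)
  then show ?case by (simp add: L2T_add)
qed

lemma L2T_cong_AE:
  assumes "L2T T f" "g \<in> borel_measurable (LT T)" "AE s in LT T. f s = g s"
  shows "L2T T g"
proof -
  have "integrable (LT T) (\<lambda>s. (g s)\<^sup>2)"
    by (rule integrable_cong_AE_imp[where g="\<lambda>s. (f s)\<^sup>2"]) (use assms in \<open>auto simp: L2T_def elim: AE_mp\<close>)
  then show ?thesis using assms by (simp add: L2T_def)
qed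

lemma nrm_nonneg: "nrm T f \<ge> 0"
  unfolding nrm_def by simp

lemma nrm_sq: "(nrm T f)\<^sup>2 = (\<integral>s. (f s)\<^sup>2 \<partial>LT T)"
  unfolding nrm_def by simp

lemma nrm_scale: "nrm T (\<lambda>s. c * f s) = \<bar>c\<bar> * nrm T f"
  unfolding nrm_def power_mult_distrib by (simp add: real_sqrt_mult)

lemma nrm_abs: "nrm T (\<lambda>s. \<bar>f s\<bar>) = nrm T f"
  unfolding nrm_def by simp

lemma nrm_zero_AE:
  assumes "L2T T f" "nrm T f = 0" shows "AE s in LT T. f s = 0"
proof -
  have "(\<integral>s. (f s)\<^sup>2 \<partial>LT T) = 0" using assms(2) unfolding nrm_def by simp
  then have "AE s in LT T. (f s)\<^sup>2 = 0"
    using integral_nonneg_eq_0_iff_AE[of "LT T" "\<lambda>s. (f s)\<^sup>2"] assms(1) by (auto simp: L2T_def)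
  then show ?thesis by auto
qed

lemma CS:
  assumes "L2T T f" "L2T T g"
  shows "\<bar>\<integral>s. f s * g s \<partial>LT T\<bar> \<le> nrm T f * nrm T g"
proof -
  have [measurable]: "f \<in> borel_measurable (LT T)" "g \<in> borel_measurable (LT T)"
    using assms by (auto simp: L2T_def)
  define A where "A = (\<integral>s. (f s)\<^sup>2 \<partial>LT T)"
  define B where "B = (\<integral>s. (g s)\<^sup>2 \<partial>LT T)"
  define C where "C = (\<integral>s. \<bar>f s\<bar> * \<bar>g s\<bar> \<partial>LT T)"
  have intfg: "integrable (LT T) (\<lambda>s. f s * g s)" by (rule L2T_mult_integrable[OF assms])
  have intafg: "integrable (LT T) (\<lambda>s. \<bar>f s\<bar> * \<bar>g s\<bar>)"
    by (rule L2T_mult_integrable[OF L2T_abs[OF assms(1)] L2T_abs[OF assms(2)]])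
  have A0: "A \<ge> 0" "B \<ge> 0" unfolding A_def B_def by auto
  have le1: "\<bar>\<integral>s. f s * g s \<partial>LT T\<bar> \<le> C"
    unfolding C_def using integral_abs_bound[of "LT T" "\<lambda>s. f s * g s"] by (simp add: abs_mult)
  have C0: "C \<ge> 0" unfolding C_def by auto
  have quad: "0 \<le> x\<^sup>2 * A - 2 * x * C + B" for x
  proof -
    have "0 \<le> (\<integral>s. (x * \<bar>f s\<bar> - \<bar>g s\<bar>)\<^sup>2 \<partial>LT T)" by auto
    also have "(\<integral>s. (x * \<bar>f s\<bar> - \<bar>g s\<bar>)\<^sup>2 \<partial>LT T) =
        (\<integral>s. x\<^sup>2 * (f s)\<^sup>2 - 2 * x * (\<bar>f s\<bar> * \<bar>g s\<bar>) + (g s)\<^sup>2 \<partial>LT T)"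
      by (rule Bochner_Integration.integral_cong) (auto simp: power2_eq_square algebra_simps)
    also have "\<dots> = x\<^sup>2 * A - 2 * x * C + B"
      unfolding A_def B_def C_def using intafg L2T_sq[OF assms(1)] L2T_sq[OF assms(2)]
      by (simp add: Bochner_Integration.integral_add Bochner_Integration.integral_diff)
    finally show ?thesis .
  qed
  have "C\<^sup>2 \<le> A * B"
  proof (cases "A = 0")
    case True
    have "AE s in LT T. f s = 0" using nrm_zero_AE[OF assms(1)] True unfolding nrm_def A_def by simp
    then have "C = 0" unfolding C_def by (subst integral_cong_AE[where g="\<lambda>_. 0"]) (auto elim: AE_mp)
    then show ?thesis using A0 by simp
  next
    case False
    then have Ap: "A > 0" using A0 by simp
    have "0 \<le> (C/A)\<^sup>2 * A - 2 * (C/A) * C + B" by (rule quad)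
    then have "0 \<le> B - C\<^sup>2 / A" using Ap by (simp add: power2_eq_square field_simps)
    then show ?thesis using Ap by (simp add: field_simps)
  qed
  then have "C \<le> sqrt A * sqrt B"
    using C0 A0 by (metis real_sqrt_le_mono real_sqrt_mult real_sqrt_abs abs_of_nonneg)
  then show ?thesis using le1 unfolding nrm_def A_def B_def by simp
qed

lemma nrm_triangle:
  assumes "L2T T f" "L2T T g"
  shows "nrm T (\<lambda>s. f s + g s) \<le> nrm T f + nrm T g"
proof -
  have "(nrm T (\<lambda>s. f s + g s))\<^sup>2 = (\<integral>s. (f s)\<^sup>2 + 2 * (f s * g s) + (g s)\<^sup>2 \<partial>LT T)"
    unfolding nrm_sq by (rule Bochner_Integration.integral_cong) (auto simp: power2_sum)
  also have "\<dots> = (nrm T f)\<^sup>2 + 2 * (\<integral>s. f s * g s \<partial>LT T) + (nrm T g)\<^sup>2"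
    unfolding nrm_sq using L2T_mult_integrable[OF assms] L2T_sq[OF assms(1)] L2T_sq[OF assms(2)]
    by (simp add: Bochner_Integration.integral_add)
  also have "\<dots> \<le> (nrm T f)\<^sup>2 + 2 * (nrm T f * nrm T g) + (nrm T g)\<^sup>2"
    using CS[OF assms] by simp
  also have "\<dots> = (nrm T f + nrm T g)\<^sup>2" by (simp add: power2_sum)
  finally show ?thesis
    using nrm_nonneg[of T f] nrm_nonneg[of T g] nrm_nonneg[of T "\<lambda>s. f s + g s"]
    by (meson power2_le_imp_le add_nonneg_nonneg)
qed

lemma nrm_triangle_diff:
  assumes "L2T T f" "L2T T g"
  shows "nrm T (\<lambda>s. f s - g s) \<le> nrm T f + nrm T g"
  using nrm_triangle[OF assms(1) L2T_uminus[OF assms(2)]] nrm_scale[of T "-1" g] by simp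

lemma nrm_sum:
  assumes "\<And>i. i \<in> I \<Longrightarrow> L2T T (f i)"
  shows "nrm T (\<lambda>s. \<Sum>i\<in>I. f i s) \<le> (\<Sum>i\<in>I. nrm T (f i))"
  using assms
proof (induction I rule: infinite_finite_induct)
  case (infinite A) then show ?case by (simp add: nrm_def)
next
  case empty then show ?case by (simp add: nrm_def)
next
  case (insert x F)
  have "nrm T (\<lambda>s. \<Sum>i\<in>insert x F. f i s) = nrm T (\<lambda>s. f x s + (\<Sum>i\<in>F. f i s))"
    using insert by simp
  also have "\<dots> \<le> nrm T (f x) + nrm T (\<lambda>s. \<Sum>i\<in>F. f i s)"
    using insert.prems by (intro nrm_triangle L2T_sum) auto
  also have "\<dots> \<le> nrm T (f x) + (\<Sum>i\<in>F. nrm T (f i))" using insert by auto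
  finally show ?case using insert by simp
qed


definition goodk :: "real \<Rightarrow> (real \<Rightarrow> real \<Rightarrow> real) \<Rightarrow> real \<Rightarrow> bool" where
  "goodk T K R \<longleftrightarrow> (\<lambda>(s,u). K s u) \<in> borel_measurable borel \<and> R \<ge> 0 \<and>
     (\<forall>s. (\<integral>\<^sup>+u. ennreal ((K s u)\<^sup>2) \<partial>LT T) \<le> ennreal R)"

lemma id_LT[measurable]: "(\<lambda>x. x) \<in> (LT T) \<rightarrow>\<^sub>M (borel::real measure)"
  by (simp add: measurable_completion measurable_restrict_space1)

lemma pair_LT: "(\<lambda>p. p) \<in> (LT T \<Otimes>\<^sub>M LT T) \<rightarrow>\<^sub>M (borel :: (real \<times> real) measure)"
proof -
  have "(\<lambda>p. (fst p, snd p)) \<in> (LT T \<Otimes>\<^sub>M LT T) \<rightarrow>\<^sub>M (borel \<Otimes>\<^sub>M borel)"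
    by (intro measurable_Pair measurable_compose[OF measurable_fst id_LT] measurable_compose[OF measurable_snd id_LT])
  then show ?thesis by (simp add: borel_prod)
qed

lemma ker_meas_pair:
  fixes K :: "real \<Rightarrow> real \<Rightarrow> real"
  assumes "(\<lambda>(s,u). K s u) \<in> borel_measurable borel"
  shows "(\<lambda>(s,u). K s u) \<in> borel_measurable (LT T \<Otimes>\<^sub>M LT T)"
  using measurable_compose[OF pair_LT assms] by simp

lemma ker_meas_sec:
  fixes K :: "real \<Rightarrow> real \<Rightarrow> real"
  assumes "(\<lambda>(s,u). K s u) \<in> borel_measurable borel"
  shows "(\<lambda>u. K s u) \<in> borel_measurable (LT T)"
proof -
  have "(\<lambda>u. (s, u)) \<in> LT T \<rightarrow>\<^sub>M (borel \<Otimes>\<^sub>M borel)"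
    by (intro measurable_Pair measurable_const id_LT) auto
  then have "(\<lambda>u. (s, u)) \<in> LT T \<rightarrow>\<^sub>M (borel :: (real \<times> real) measure)" by (simp add: borel_prod)
  from measurable_compose[OF this assms] show ?thesis by simp
qed

lemma ker_meas_sec2:
  fixes K :: "real \<Rightarrow> real \<Rightarrow> real"
  assumes "(\<lambda>(s,u). K s u) \<in> borel_measurable borel"
  shows "(\<lambda>s. K s u) \<in> borel_measurable (LT T)"
proof -
  have "(\<lambda>s. (s, u)) \<in> LT T \<rightarrow>\<^sub>M (borel \<Otimes>\<^sub>M borel)"
    by (intro measurable_Pair measurable_const id_LT) auto
  then have "(\<lambda>s. (s, u)) \<in> LT T \<rightarrow>\<^sub>M (borel :: (real \<times> real) measure)" by (simp add: borel_prod)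
  from measurable_compose[OF this assms] show ?thesis by simp
qed

lemma sigma_LT: "T \<ge> 0 \<Longrightarrow> sigma_finite_measure (LT T)"
  using finite_LT finite_measure.axioms(1) by blast

lemma goodk_row_L2:
  assumes "goodk T K R" shows "L2T T (\<lambda>u. K s u)"
proof -
  have m: "(\<lambda>u. K s u) \<in> borel_measurable (LT T)"
    using assms ker_meas_sec unfolding goodk_def by blast
  have le: "(\<integral>\<^sup>+u. ennreal ((K s u)\<^sup>2) \<partial>LT T) \<le> ennreal R"
    using assms unfolding goodk_def by auto
  have "(\<integral>\<^sup>+u. ennreal ((K s u)\<^sup>2) \<partial>LT T) < \<infinity>"
    using order.strict_trans1[OF le ennreal_less_top] by simp
  then have "integrable (LT T) (\<lambda>u. (K s u)\<^sup>2)"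
    using m by (intro integrableI_nonneg) auto
  with m show ?thesis by (simp add: L2T_def)
qed

lemma goodk_row_nrm:
  assumes "goodk T K R" shows "nrm T (\<lambda>u. K s u) \<le> sqrt R"
proof -
  have "(\<integral>u. (K s u)\<^sup>2 \<partial>LT T) \<le> R"
    using assms unfolding goodk_def by (intro integral_real_bounded) auto
  then show ?thesis unfolding nrm_def by simp
qed

lemma kop_integrable:
  assumes "goodk T K R" "L2T T h" shows "integrable (LT T) (\<lambda>u. K s u * h u)"
  using L2T_mult_integrable[OF goodk_row_L2[OF assms(1)] assms(2)] .

lemma kop_pt:
  assumes "goodk T K R" "L2T T h" shows "\<bar>kop T K h s\<bar> \<le> sqrt R * nrm T h"
proof -
  have "\<bar>kop T K h s\<bar> \<le> nrm T (\<lambda>u. K s u) * nrm T h"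
    unfolding kop_def using CS[OF goodk_row_L2[OF assms(1)] assms(2)] .
  also have "\<dots> \<le> sqrt R * nrm T h"
    by (intro mult_right_mono goodk_row_nrm[OF assms(1)] nrm_nonneg)
  finally show ?thesis .
qed

lemma kop_meas:
  assumes "T \<ge> 0" "goodk T K R" "L2T T h" shows "kop T K h \<in> borel_measurable (LT T)"
proof -
  interpret sigma_finite_measure "LT T" using sigma_LT[OF assms(1)] .
  have [measurable]: "(\<lambda>(s,u). K s u) \<in> borel_measurable (LT T \<Otimes>\<^sub>M LT T)"
    using ker_meas_pair assms(2) unfolding goodk_def by blast
  have [measurable]: "h \<in> borel_measurable (LT T)" using assms(3) by (simp add: L2T_def)
  have "(\<lambda>(s,u). K s u * h u) \<in> borel_measurable (LT T \<Otimes>\<^sub>M LT T)" by measurable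
  then show ?thesis unfolding kop_def
    by (rule borel_measurable_lebesgue_integral[where f="\<lambda>s u. K s u * h u", simplified])
qed

lemma kop_L2T:
  assumes "T \<ge> 0" "goodk T K R" "L2T T h"
  shows "L2T T (kop T K h)" "nrm T (kop T K h) \<le> sqrt (T * R) * nrm T h"
proof -
  interpret finite_measure "LT T" using finite_LT[OF assms(1)] .
  have m: "kop T K h \<in> borel_measurable (LT T)" by (rule kop_meas[OF assms])
  have b: "(kop T K h s)\<^sup>2 \<le> R * (nrm T h)\<^sup>2" for s
  proof -
    have "\<bar>kop T K h s\<bar> \<le> sqrt R * nrm T h" by (rule kop_pt[OF assms(2,3)])
    then have "(kop T K h s)\<^sup>2 \<le> (sqrt R * nrm T h)\<^sup>2"
      by (metis abs_ge_zero power2_abs power_mono)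
    also have "\<dots> = R * (nrm T h)\<^sup>2" using assms(2) unfolding goodk_def by (simp add: power_mult_distrib)
    finally show ?thesis .
  qed
  have i: "integrable (LT T) (\<lambda>s. (kop T K h s)\<^sup>2)"
    by (rule integrable_const_bound[where B="R * (nrm T h)\<^sup>2"]) (use m b in auto)
  then show "L2T T (kop T K h)" using m by (simp add: L2T_def)
  have "(\<integral>s. (kop T K h s)\<^sup>2 \<partial>LT T) \<le> (\<integral>s. R * (nrm T h)\<^sup>2 \<partial>LT T)"
    by (intro integral_mono i b) auto
  also have "\<dots> = T * R * (nrm T h)\<^sup>2" using measure_LT[OF assms(1)] by (simp add: nrm_sq)
  finally have A: "(\<integral>s. (kop T K h s)\<^sup>2 \<partial>LT T) \<le> T * R * (nrm T h)\<^sup>2" .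
  have R0: "R \<ge> 0" using assms(2) by (simp add: goodk_def)
  have "(nrm T (kop T K h))\<^sup>2 \<le> (sqrt (T * R) * nrm T h)\<^sup>2"
    unfolding power_mult_distrib using A assms(1) R0 by (simp add: nrm_sq)
  then show "nrm T (kop T K h) \<le> sqrt (T * R) * nrm T h"
    by (rule power2_le_imp_le) (use assms(1,2) in \<open>auto simp: goodk_def nrm_nonneg\<close>)
qed

lemma kop_lin:
  assumes "goodk T K R" "L2T T f" "L2T T g"
  shows "kop T K (\<lambda>u. a * f u + b * g u) s = a * kop T K f s + b * kop T K g s"
proof -
  have "kop T K (\<lambda>u. a * f u + b * g u) s = (\<integral>u. a * (K s u * f u) + b * (K s u * g u) \<partial>LT T)"
    unfolding kop_def by (rule Bochner_Integration.integral_cong) (auto simp: algebra_simps)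
  also have "\<dots> = a * kop T K f s + b * kop T K g s"
    unfolding kop_def using kop_integrable[OF assms(1,2), of s] kop_integrable[OF assms(1,3), of s]
    by simp
  finally show ?thesis .
qed

lemma kop_add_ker:
  assumes "goodk T K1 R1" "goodk T K2 R2" "L2T T h"
  shows "kop T (\<lambda>s u. K1 s u + K2 s u) h s = kop T K1 h s + kop T K2 h s"
proof -
  have "kop T (\<lambda>s u. K1 s u + K2 s u) h s = (\<integral>u. K1 s u * h u + K2 s u * h u \<partial>LT T)"
    unfolding kop_def by (rule Bochner_Integration.integral_cong) (auto simp: algebra_simps)
  also have "\<dots> = kop T K1 h s + kop T K2 h s"
    unfolding kop_def using kop_integrable[OF assms(1,3), of s] kop_integrable[OF assms(2,3), of s]
    by simp
  finally show ?thesis .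
qed

lemma kop_scale_ker:
  "kop T (\<lambda>s u. c * K s u) h s = c * kop T K h s"
proof -
  have "(\<lambda>u. c * K s u * h u) = (\<lambda>u. c * (K s u * h u))" by (simp add: mult.assoc)
  then show ?thesis by (simp only: kop_def integral_mult_right_zero)
qed

lemma goodk_add:
  assumes "goodk T K1 R1" "goodk T K2 R2"
  shows "goodk T (\<lambda>s u. K1 s u + K2 s u) (2 * R1 + 2 * R2)"
  unfolding goodk_def
proof (intro conjI allI)
  show "(\<lambda>(s, u). K1 s u + K2 s u) \<in> borel_measurable borel"
  proof -
    have e: "(\<lambda>(s, u). K1 s u + K2 s u) = (\<lambda>p. (\<lambda>(s,u). K1 s u) p + (\<lambda>(s,u). K2 s u) p)" by auto
    show ?thesis unfolding e using assms unfolding goodk_def by (intro borel_measurable_add) auto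
  qed
  show "0 \<le> 2 * R1 + 2 * R2" using assms unfolding goodk_def by simp
  fix s
  have ee: "ennreal (2 * x + 2 * y) = 2 * ennreal x + 2 * ennreal y" if "x \<ge> 0" "y \<ge> 0" for x y :: real
    using that by (simp add: ennreal_plus ennreal_mult)
  have "(\<integral>\<^sup>+u. ennreal ((K1 s u + K2 s u)\<^sup>2) \<partial>LT T) \<le>
        (\<integral>\<^sup>+u. 2 * ennreal ((K1 s u)\<^sup>2) + 2 * ennreal ((K2 s u)\<^sup>2) \<partial>LT T)"
  proof (rule nn_integral_mono)
    fix u
    have "0 \<le> (K1 s u - K2 s u)\<^sup>2" by simp
    then have "(K1 s u + K2 s u)\<^sup>2 \<le> 2 * (K1 s u)\<^sup>2 + 2 * (K2 s u)\<^sup>2"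
      unfolding power2_sum power2_diff by linarith
    then have "ennreal ((K1 s u + K2 s u)\<^sup>2) \<le> ennreal (2 * (K1 s u)\<^sup>2 + 2 * (K2 s u)\<^sup>2)"
      by (rule ennreal_leI)
    then show "ennreal ((K1 s u + K2 s u)\<^sup>2) \<le> 2 * ennreal ((K1 s u)\<^sup>2) + 2 * ennreal ((K2 s u)\<^sup>2)"
      by (subst ee[symmetric]) auto
  qed
  also have "\<dots> = 2 * (\<integral>\<^sup>+u. ennreal ((K1 s u)\<^sup>2) \<partial>LT T) + 2 * (\<integral>\<^sup>+u. ennreal ((K2 s u)\<^sup>2) \<partial>LT T)"
  proof -
    have [measurable]: "(\<lambda>u. K1 s u) \<in> borel_measurable (LT T)" "(\<lambda>u. K2 s u) \<in> borel_measurable (LT T)"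
      using assms ker_meas_sec unfolding goodk_def by blast+
    have "(\<integral>\<^sup>+u. 2 * ennreal ((K1 s u)\<^sup>2) + 2 * ennreal ((K2 s u)\<^sup>2) \<partial>LT T) =
      (\<integral>\<^sup>+u. 2 * ennreal ((K1 s u)\<^sup>2) \<partial>LT T) + (\<integral>\<^sup>+u. 2 * ennreal ((K2 s u)\<^sup>2) \<partial>LT T)"
      by (rule nn_integral_add) measurable
    then show ?thesis by (simp add: nn_integral_cmult)
  qed
  also have "\<dots> \<le> 2 * ennreal R1 + 2 * ennreal R2"
    using assms unfolding goodk_def by (intro add_mono mult_left_mono) auto
  also have "\<dots> = ennreal (2 * R1 + 2 * R2)"
    using assms unfolding goodk_def by (intro ee[symmetric]) auto
  finally show "(\<integral>\<^sup>+u. ennreal ((K1 s u + K2 s u)\<^sup>2) \<partial>LT T) \<le> ennreal (2 * R1 + 2 * R2)" .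
qed


lemma goodk_bdd:
  assumes "T \<ge> 0" "(\<lambda>(s,u). K s u) \<in> borel_measurable borel" "\<And>s u. \<bar>K s u\<bar> \<le> B"
  shows "goodk T K (B\<^sup>2 * T)"
  unfolding goodk_def
proof (intro conjI allI assms(2))
  have B0: "B \<ge> 0" using assms(3)[of 0 0] by simp
  show "0 \<le> B\<^sup>2 * T" using assms(1) by simp
  fix s
  have "(\<integral>\<^sup>+u. ennreal ((K s u)\<^sup>2) \<partial>LT T) \<le> (\<integral>\<^sup>+u. ennreal (B\<^sup>2) \<partial>LT T)"
  proof (rule nn_integral_mono)
    fix u show "ennreal ((K s u)\<^sup>2) \<le> ennreal (B\<^sup>2)"
      using assms(3)[of s u] B0 by (intro ennreal_leI) (metis abs_ge_zero power2_abs power_mono)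
  qed
  also have "\<dots> = ennreal (B\<^sup>2 * T)"
    using assms(1) by (simp add: emeasure_LT ennreal_mult)
  finally show "(\<integral>\<^sup>+u. ennreal ((K s u)\<^sup>2) \<partial>LT T) \<le> ennreal (B\<^sup>2 * T)" .
qed


lemma goodk_mult_ind:
  assumes "goodk T K R" "(\<lambda>(s,u). w s u) \<in> borel_measurable borel" "\<And>s u. \<bar>w s u\<bar> \<le> 1"
  shows "goodk T (\<lambda>s u. K s u * w s u) R"
  unfolding goodk_def
proof (intro conjI allI)
  show "(\<lambda>(s, u). K s u * w s u) \<in> borel_measurable borel"
  proof -
    have e: "(\<lambda>(s, u). K s u * w s u) = (\<lambda>p. (\<lambda>(s,u). K s u) p * (\<lambda>(s,u). w s u) p)" by auto
    show ?thesis unfolding e using assms unfolding goodk_def by (intro borel_measurable_times) auto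
  qed
  show "0 \<le> R" using assms unfolding goodk_def by simp
  fix s
  have "(\<integral>\<^sup>+u. ennreal ((K s u * w s u)\<^sup>2) \<partial>LT T) \<le> (\<integral>\<^sup>+u. ennreal ((K s u)\<^sup>2) \<partial>LT T)"
  proof (rule nn_integral_mono)
    fix u
    have "(w s u)\<^sup>2 \<le> 1" using assms(3)[of s u] by (simp add: abs_square_le_1)
    then have "(K s u * w s u)\<^sup>2 \<le> (K s u)\<^sup>2" 
      by (simp add: power_mult_distrib mult_left_le)
    then show "ennreal ((K s u * w s u)\<^sup>2) \<le> ennreal ((K s u)\<^sup>2)" by (rule ennreal_leI)
  qed
  also have "\<dots> \<le> ennreal R" using assms unfolding goodk_def by auto
  finally show "(\<integral>\<^sup>+u. ennreal ((K s u * w s u)\<^sup>2) \<partial>LT T) \<le> ennreal R" .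
qed



lemma mink:
  assumes T0: "T \<ge> 0" and L2: "\<And>n. L2T T (a n)" and sm: "summable (\<lambda>n. nrm T (a n))"
  shows "AE s in LT T. summable (\<lambda>n. \<bar>a n s\<bar>)"
    and "(\<integral>\<^sup>+s. ennreal ((\<Sum>n. \<bar>a n s\<bar>)\<^sup>2) \<partial>LT T) \<le> ennreal ((\<Sum>n. nrm T (a n))\<^sup>2)"
proof -
  define C where "C = (\<Sum>n. nrm T (a n))"
  define F where "F N s = (\<Sum>n<N. \<bar>a n s\<bar>)" for N s
  have FL2: "L2T T (F N)" for N unfolding F_def by (intro L2T_sum L2T_abs L2)
  have [measurable]: "F N \<in> borel_measurable (LT T)" for N using FL2 by (simp add: L2T_def)
  have C0: "C \<ge> 0" unfolding C_def using sm by (intro suminf_nonneg) (auto simp: nrm_nonneg)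
  have nF: "nrm T (F N) \<le> C" for N
  proof -
    have "nrm T (F N) \<le> (\<Sum>n<N. nrm T (\<lambda>s. \<bar>a n s\<bar>))"
      unfolding F_def by (rule nrm_sum) (intro L2T_abs L2)
    also have "\<dots> = (\<Sum>n<N. nrm T (a n))" by (simp add: nrm_abs)
    also have "\<dots> \<le> C" unfolding C_def using sm by (intro sum_le_suminf) (auto simp: nrm_nonneg)
    finally show ?thesis .
  qed
  have F0: "F N s \<ge> 0" for N s unfolding F_def by (auto intro: sum_nonneg)
  have Fmono: "F N s \<le> F M s" if "N \<le> M" for N M s
    unfolding F_def using that by (intro sum_mono2) auto
  define H where "H s = (SUP N. ennreal ((F N s)\<^sup>2))" for s
  have inc: "incseq (\<lambda>N s. ennreal ((F N s)\<^sup>2))"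
    by (auto simp: incseq_def le_fun_def intro!: ennreal_leI power_mono Fmono F0)
  have intF: "(\<integral>\<^sup>+s. ennreal ((F N s)\<^sup>2) \<partial>LT T) \<le> ennreal (C\<^sup>2)" for N
  proof -
    have "(\<integral>\<^sup>+s. ennreal ((F N s)\<^sup>2) \<partial>LT T) = ennreal (\<integral>s. (F N s)\<^sup>2 \<partial>LT T)"
      using FL2[of N] by (intro nn_integral_eq_integral) (auto simp: L2T_def)
    also have "\<dots> = ennreal ((nrm T (F N))\<^sup>2)" by (simp add: nrm_sq)
    also have "\<dots> \<le> ennreal (C\<^sup>2)" using nF[of N] nrm_nonneg[of T "F N"]
      by (intro ennreal_leI power_mono) auto
    finally show ?thesis .
  qed
  have intH: "(\<integral>\<^sup>+s. H s \<partial>LT T) \<le> ennreal (C\<^sup>2)"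
    unfolding H_def using inc
    by (subst nn_integral_monotone_convergence_SUP) (auto intro!: SUP_least intF)
  have Hm[measurable]: "H \<in> borel_measurable (LT T)" unfolding H_def by measurable
  have "AE s in LT T. H s \<noteq> \<infinity>"
    using intH by (intro nn_integral_PInf_AE Hm) (auto simp: top_unique)
  then have AEH: "AE s in LT T. summable (\<lambda>n. \<bar>a n s\<bar>) \<and> ennreal ((\<Sum>n. \<bar>a n s\<bar>)\<^sup>2) \<le> H s"
  proof (rule AE_mp, intro AE_I2 impI)
    fix s assume Hs: "H s \<noteq> \<infinity>"
    define h where "h = enn2real (H s)"
    have Hh: "H s = ennreal h" unfolding h_def using Hs by (simp add: less_top[symmetric])
    have h0: "h \<ge> 0" unfolding h_def by simp
    have bF: "(F N s)\<^sup>2 \<le> h" for N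
    proof -
      have "ennreal ((F N s)\<^sup>2) \<le> H s" unfolding H_def by (rule SUP_upper) auto
      then show ?thesis unfolding Hh using h0 by (simp add: ennreal_le_iff)
    qed
    have bF2: "F N s \<le> sqrt h" for N
      using bF[of N] F0[of N s] by (metis real_le_rsqrt)
    have smm: "summable (\<lambda>n. \<bar>a n s\<bar>)"
      by (rule summableI_nonneg_bounded[where x="sqrt h"]) (use bF2 in \<open>auto simp: F_def\<close>)
    have "(\<lambda>N. F N s) \<longlonglongrightarrow> (\<Sum>n. \<bar>a n s\<bar>)"
      unfolding F_def using summable_LIMSEQ[OF smm] .
    then have "(\<lambda>N. (F N s)\<^sup>2) \<longlonglongrightarrow> (\<Sum>n. \<bar>a n s\<bar>)\<^sup>2" by (intro tendsto_power)
    then have "(\<Sum>n. \<bar>a n s\<bar>)\<^sup>2 \<le> h"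
      by (rule LIMSEQ_le_const2) (use bF in auto)
    then show "summable (\<lambda>n. \<bar>a n s\<bar>) \<and> ennreal ((\<Sum>n. \<bar>a n s\<bar>)\<^sup>2) \<le> H s"
      using smm Hh by (simp add: ennreal_leI)
  qed
  then show "AE s in LT T. summable (\<lambda>n. \<bar>a n s\<bar>)" by auto
  have "(\<integral>\<^sup>+s. ennreal ((\<Sum>n. \<bar>a n s\<bar>)\<^sup>2) \<partial>LT T) \<le> (\<integral>\<^sup>+s. H s \<partial>LT T)"
    by (rule nn_integral_mono_AE) (use AEH in auto)
  also have "\<dots> \<le> ennreal (C\<^sup>2)" by (rule intH)
  finally show "(\<integral>\<^sup>+s. ennreal ((\<Sum>n. \<bar>a n s\<bar>)\<^sup>2) \<partial>LT T) \<le> ennreal ((\<Sum>n. nrm T (a n))\<^sup>2)"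
    unfolding C_def .
qed


lemma exist_solution:
  fixes Dop :: "(real \<Rightarrow> real) \<Rightarrow> real \<Rightarrow> real"
  assumes T0: "T \<ge> 0"
    and L2: "\<And>h. L2T T h \<Longrightarrow> L2T T (Dop h)"
    and bnd: "\<And>h. L2T T h \<Longrightarrow> nrm T (Dop h) \<le> Mb * nrm T h"
    and coer: "\<And>h. L2T T h \<Longrightarrow> c0 * (nrm T h)\<^sup>2 \<le> (\<integral>s. h s * Dop h s \<partial>LT T)"
    and c0: "c0 > 0"
    and lin: "\<And>f g a b. L2T T f \<Longrightarrow> L2T T g \<Longrightarrow>
                Dop (\<lambda>s. a * f s + b * g s) = (\<lambda>s. a * Dop f s + b * Dop g s)"
    and f: "L2T T f"
  shows "\<exists>g. L2T T g \<and> (AE s in LT T. Dop g s = f s)"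
proof -
  define c where "c = Mb\<^sup>2 / c0 + c0"
  have cpos: "c > 0" unfolding c_def using c0 by (simp add: add_nonneg_pos)
  have cge: "Mb\<^sup>2 \<le> c0 * c" unfolding c_def using c0 by (simp add: field_simps)
  define q2 where "q2 = 1 - c0 / c"
  have q2lt: "q2 < 1" unfolding q2_def using c0 cpos by simp
  have q2ge: "q2 \<ge> 0" unfolding q2_def using c0 cpos unfolding c_def
    by (simp add: field_simps)
  define q where "q = sqrt q2"
  have q0: "q \<ge> 0" and q1: "q < 1" unfolding q_def using q2ge q2lt by auto
  define B where "B h = (\<lambda>s. h s - Dop h s / c)" for h
  have BL2: "L2T T h \<Longrightarrow> L2T T (B h)" for h
    unfolding B_def using L2T_diff[OF _ L2T_scale[OF L2, of h "1/c"]] by simp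
  have Bn: "nrm T (B h) \<le> q * nrm T h" if h: "L2T T h" for h
  proof -
    have Dh: "L2T T (Dop h)" by (rule L2[OF h])
    have nD: "(nrm T (Dop h))\<^sup>2 \<le> Mb\<^sup>2 * (nrm T h)\<^sup>2"
    proof -
      have "0 \<le> nrm T (Dop h)" by (rule nrm_nonneg)
      then have "(nrm T (Dop h))\<^sup>2 \<le> (Mb * nrm T h)\<^sup>2"
        using bnd[OF h] by (intro power_mono) auto
      then show ?thesis by (simp add: power_mult_distrib)
    qed
    have "(nrm T (B h))\<^sup>2 = (\<integral>s. (h s)\<^sup>2 - (2 / c) * (h s * Dop h s) + (1 / c\<^sup>2) * (Dop h s)\<^sup>2 \<partial>LT T)"
      unfolding nrm_sq B_def using cpos
      by (intro Bochner_Integration.integral_cong) (auto simp: power2_eq_square field_simps)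
    also have "\<dots> = (nrm T h)\<^sup>2 - (2 / c) * (\<integral>s. h s * Dop h s \<partial>LT T) + (1 / c\<^sup>2) * (nrm T (Dop h))\<^sup>2"
      unfolding nrm_sq using L2T_sq[OF h] L2T_sq[OF Dh] L2T_mult_integrable[OF h Dh]
      by (simp add: Bochner_Integration.integral_add Bochner_Integration.integral_diff)
    also have "\<dots> \<le> (nrm T h)\<^sup>2 - (2 / c) * (c0 * (nrm T h)\<^sup>2) + (1 / c\<^sup>2) * (Mb\<^sup>2 * (nrm T h)\<^sup>2)"
      using coer[OF h] nD cpos
      by (intro add_mono diff_mono mult_left_mono) auto
    also have "\<dots> \<le> q2 * (nrm T h)\<^sup>2"
    proof -
      have "(1 / c\<^sup>2) * (Mb\<^sup>2 * (nrm T h)\<^sup>2) \<le> (1 / c\<^sup>2) * (c0 * c * (nrm T h)\<^sup>2)"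
        using cge cpos by (intro mult_left_mono mult_right_mono) auto
      also have "\<dots> = (c0 / c) * (nrm T h)\<^sup>2" using cpos by (simp add: power2_eq_square field_simps)
      finally have "(1 / c\<^sup>2) * (Mb\<^sup>2 * (nrm T h)\<^sup>2) \<le> (c0 / c) * (nrm T h)\<^sup>2" .
      then show ?thesis unfolding q2_def by (simp add: algebra_simps)
    qed
    also have "\<dots> = (q * nrm T h)\<^sup>2" unfolding q_def using q2ge by (simp add: power_mult_distrib)
    finally have "(nrm T (B h))\<^sup>2 \<le> (q * nrm T h)\<^sup>2" .
    then show ?thesis
      by (rule power2_le_imp_le) (simp add: q0 nrm_nonneg)
  qed
  define a where "a n = (B ^^ n) f" for n
  have aL2: "L2T T (a n)" for n unfolding a_def by (induction n) (auto simp: f BL2)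
  have an: "nrm T (a n) \<le> q ^ n * nrm T f" for n
  proof (induction n)
    case 0 then show ?case by (simp add: a_def)
  next
    case (Suc n)
    have "nrm T (a (Suc n)) = nrm T (B (a n))" by (simp add: a_def)
    also have "\<dots> \<le> q * nrm T (a n)" by (rule Bn[OF aL2])
    also have "\<dots> \<le> q * (q ^ n * nrm T f)" using Suc q0 by (intro mult_left_mono) auto
    finally show ?case by simp
  qed
  define S where "S N = (\<lambda>s. \<Sum>n<N. a n s / c)" for N
  have SL2: "L2T T (S N)" for N unfolding S_def
    using L2T_sum[of "{..<N}" T "\<lambda>n s. a n s / c"] L2T_scale[OF aL2, of "1/c"] by simp
  have D0: "Dop (\<lambda>s. 0) = (\<lambda>s. 0)"
    using lin[OF L2T_zero L2T_zero, of 0 0] by simp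
  have DS: "Dop (S N) = (\<lambda>s. f s - a N s)" for N
  proof (induction N)
    case 0 then show ?case by (simp add: S_def a_def D0)
  next
    case (Suc N)
    have eq: "S (Suc N) = (\<lambda>s. 1 * S N s + (1 / c) * a N s)" unfolding S_def by (auto simp: field_simps)
    have "Dop (S (Suc N)) = (\<lambda>s. 1 * Dop (S N) s + (1 / c) * Dop (a N) s)"
      unfolding eq by (rule lin[OF SL2 aL2])
    also have "\<dots> = (\<lambda>s. f s - a (Suc N) s)"
      using Suc cpos by (auto simp: a_def B_def field_simps)
    finally show ?case .
  qed
  have sumq: "summable (\<lambda>n. q ^ n * nrm T f)"
    using q0 q1 by (intro summable_mult2 summable_geometric) auto
  have sma: "summable (\<lambda>n. nrm T (a (n + N)))" for N
    by (rule summable_comparison_test[OF _ summable_ignore_initial_segment[OF sumq, of N]])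
       (use an nrm_nonneg in auto)
  have tail: "(\<Sum>n. nrm T (a (n + N))) \<le> q ^ N * (nrm T f / (1 - q))" for N
  proof -
    have "(\<Sum>n. nrm T (a (n + N))) \<le> (\<Sum>n. q ^ (n + N) * nrm T f)"
      by (intro suminf_le sma summable_ignore_initial_segment[OF sumq]) (use an in auto)
    also have "\<dots> = (\<Sum>n. q ^ N * nrm T f * q ^ n)"
      by (simp add: power_add mult_ac)
    also have "\<dots> = q ^ N * nrm T f * (1 / (1 - q))"
      using q0 q1 by (subst suminf_mult) (auto simp: suminf_geometric)
    finally show ?thesis by simp
  qed
  define C where "C = nrm T f / ((1 - q) * c)"
  have C0: "C \<ge> 0" unfolding C_def using q1 cpos nrm_nonneg[of T f] by simp
  have aM[measurable]: "a n \<in> borel_measurable (LT T)" for n using aL2 by (simp add: L2T_def)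
  have AEsm: "AE s in LT T. summable (\<lambda>n. \<bar>a n s\<bar>)"
    using mink(1)[OF T0 aL2 sma[of 0]] by simp
  define g where "g s = (\<Sum>n. a n s) / c" for s
  have gM[measurable]: "g \<in> borel_measurable (LT T)" unfolding g_def by measurable
  have SM[measurable]: "S N \<in> borel_measurable (LT T)" for N using SL2 by (simp add: L2T_def)
  have dist: "(\<integral>\<^sup>+s. ennreal ((g s - S N s)\<^sup>2) \<partial>LT T) \<le> ennreal ((q ^ N * C)\<^sup>2)" for N
  proof -
    have "AE s in LT T. ennreal ((g s - S N s)\<^sup>2) \<le> ennreal ((\<Sum>n. \<bar>a (n + N) s\<bar>)\<^sup>2 / c\<^sup>2)"
      using AEsm
    proof (rule AE_mp, intro AE_I2 impI)
      fix s assume sm: "summable (\<lambda>n. \<bar>a n s\<bar>)"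
      then have sm': "summable (\<lambda>n. a n s)" by (rule summable_rabs_cancel)
      have "(\<Sum>n. a n s) = (\<Sum>n. a (n + N) s) + (\<Sum>n<N. a n s)"
        by (rule suminf_split_initial_segment[OF sm'])
      moreover have "S N s = (\<Sum>n<N. a n s) / c" unfolding S_def by (simp add: sum_divide_distrib)
      ultimately have "g s - S N s = (\<Sum>n. a (n + N) s) / c"
        unfolding g_def by (simp add: diff_divide_distrib add_divide_distrib)
      moreover have "\<bar>\<Sum>n. a (n + N) s\<bar> \<le> (\<Sum>n. \<bar>a (n + N) s\<bar>)"
        by (rule summable_rabs) (rule summable_ignore_initial_segment[OF sm])
      ultimately have "\<bar>g s - S N s\<bar> \<le> (\<Sum>n. \<bar>a (n + N) s\<bar>) / c"
        using cpos by (simp add: divide_right_mono)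
      then have "(g s - S N s)\<^sup>2 \<le> ((\<Sum>n. \<bar>a (n + N) s\<bar>) / c)\<^sup>2"
        by (metis abs_ge_zero power2_abs power_mono)
      then show "ennreal ((g s - S N s)\<^sup>2) \<le> ennreal ((\<Sum>n. \<bar>a (n + N) s\<bar>)\<^sup>2 / c\<^sup>2)"
        by (intro ennreal_leI) (simp add: power_divide)
    qed
    then have "(\<integral>\<^sup>+s. ennreal ((g s - S N s)\<^sup>2) \<partial>LT T) \<le>
               (\<integral>\<^sup>+s. ennreal ((\<Sum>n. \<bar>a (n + N) s\<bar>)\<^sup>2) * ennreal (1 / c\<^sup>2) \<partial>LT T)"
      by (rule nn_integral_mono_AE[OF AE_mp]) (auto simp: ennreal_mult[symmetric] divide_inverse)
    also have "\<dots> = (\<integral>\<^sup>+s. ennreal ((\<Sum>n. \<bar>a (n + N) s\<bar>)\<^sup>2) \<partial>LT T) * ennreal (1 / c\<^sup>2)"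
      by (rule nn_integral_multc) measurable
    also have "\<dots> \<le> ennreal ((\<Sum>n. nrm T (a (n + N)))\<^sup>2) * ennreal (1 / c\<^sup>2)"
      by (intro mult_right_mono mink(2)[OF T0 aL2 sma]) auto
    also have "\<dots> = ennreal ((\<Sum>n. nrm T (a (n + N)))\<^sup>2 / c\<^sup>2)"
      by (simp add: ennreal_mult[symmetric] divide_inverse)
    also have "\<dots> \<le> ennreal ((q ^ N * C)\<^sup>2)"
    proof (rule ennreal_leI)
      have s0: "0 \<le> (\<Sum>n. nrm T (a (n + N)))" by (intro suminf_nonneg sma) (auto simp: nrm_nonneg)
      have "(\<Sum>n. nrm T (a (n + N))) / c \<le> q ^ N * (nrm T f / (1 - q)) / c"
        by (rule divide_right_mono[OF tail]) (use cpos in simp)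
      also have "\<dots> = q ^ N * C" unfolding C_def using q1 cpos by (simp add: field_simps)
      finally have "((\<Sum>n. nrm T (a (n + N))) / c)\<^sup>2 \<le> (q ^ N * C)\<^sup>2"
        using s0 cpos by (intro power_mono) auto
      then show "(\<Sum>n. nrm T (a (n + N)))\<^sup>2 / c\<^sup>2 \<le> (q ^ N * C)\<^sup>2" by (simp add: power_divide)
    qed
    finally show ?thesis .
  qed
  have gSL2: "L2T T (\<lambda>s. g s - S N s)" and gSn: "nrm T (\<lambda>s. g s - S N s) \<le> q ^ N * C" for N
  proof -
    have "(\<integral>\<^sup>+s. ennreal (norm ((g s - S N s)\<^sup>2)) \<partial>LT T) < \<infinity>"
      using dist[of N] by (simp add: le_less_trans)
    then have "integrable (LT T) (\<lambda>s. (g s - S N s)\<^sup>2)" by (intro integrableI_bounded) measurable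
    then show L: "L2T T (\<lambda>s. g s - S N s)" by (simp add: L2T_def)
    have "(\<integral>s. (g s - S N s)\<^sup>2 \<partial>LT T) \<le> (q ^ N * C)\<^sup>2"
      by (rule integral_real_bounded) (use dist in auto)
    then have "nrm T (\<lambda>s. g s - S N s) \<le> sqrt ((q ^ N * C)\<^sup>2)"
      unfolding nrm_def by (rule real_sqrt_le_mono)
    also have "\<dots> = q ^ N * C" using q0 C0 by simp
    finally show "nrm T (\<lambda>s. g s - S N s) \<le> q ^ N * C" .
  qed
  have gL2: "L2T T g"
    using gSL2[of 0] by (simp add: S_def)
  have key: "nrm T (\<lambda>s. Dop g s - f s) \<le> q ^ N * (\<bar>Mb\<bar> * C + nrm T f)" for N
  proof -
    have e: "g = (\<lambda>s. 1 * S N s + 1 * (g s - S N s))" by auto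
    have "Dop g = (\<lambda>s. 1 * Dop (S N) s + 1 * Dop (\<lambda>s. g s - S N s) s)"
      by (subst e, rule lin[OF SL2 gSL2])
    then have "(\<lambda>s. Dop g s - f s) = (\<lambda>s. Dop (\<lambda>s. g s - S N s) s - a N s)"
      by (simp add: DS)
    then have "nrm T (\<lambda>s. Dop g s - f s) \<le> nrm T (Dop (\<lambda>s. g s - S N s)) + nrm T (a N)"
      using nrm_triangle_diff[OF L2[OF gSL2] aL2] by simp
    also have "\<dots> \<le> \<bar>Mb\<bar> * (q ^ N * C) + q ^ N * nrm T f"
    proof (intro add_mono an)
      have "nrm T (Dop (\<lambda>s. g s - S N s)) \<le> Mb * nrm T (\<lambda>s. g s - S N s)" by (rule bnd[OF gSL2])
      also have "\<dots> \<le> \<bar>Mb\<bar> * nrm T (\<lambda>s. g s - S N s)" by (intro mult_right_mono) (auto simp: nrm_nonneg)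
      also have "\<dots> \<le> \<bar>Mb\<bar> * (q ^ N * C)" by (intro mult_left_mono gSn) auto
      finally show "nrm T (Dop (\<lambda>s. g s - S N s)) \<le> \<bar>Mb\<bar> * (q ^ N * C)" .
    qed
    also have "\<dots> = q ^ N * (\<bar>Mb\<bar> * C + nrm T f)" by (simp add: algebra_simps)
    finally show ?thesis .
  qed
  have lim: "(\<lambda>N. q ^ N * (\<bar>Mb\<bar> * C + nrm T f)) \<longlonglongrightarrow> 0 * (\<bar>Mb\<bar> * C + nrm T f)"
    using q0 q1 by (intro tendsto_mult LIMSEQ_power_zero tendsto_const) auto
  have "nrm T (\<lambda>s. Dop g s - f s) \<le> 0 * (\<bar>Mb\<bar> * C + nrm T f)"
    by (rule LIMSEQ_le_const[OF lim]) (use key in auto)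
  then have "nrm T (\<lambda>s. Dop g s - f s) \<le> 0" by simp
  then have "nrm T (\<lambda>s. Dop g s - f s) = 0" using nrm_nonneg by (metis order.antisym)
  then have "AE s in LT T. Dop g s - f s = 0"
    by (intro nrm_zero_AE L2T_diff L2 gL2 f)
  then have "AE s in LT T. Dop g s = f s" by auto
  with gL2 show ?thesis by blast
qed


lemma AE_lborel_LT:
  assumes "AE x in lborel. P x" shows "AE x in LT T. P x"
proof -
  have "AE x in lebesgue. P x" using assms by (rule AE_completion)
  then have "AE x in lebesgue. x \<in> {0..T} \<longrightarrow> P x" by auto
  then show ?thesis by (subst AE_restrict_space_iff) auto
qed

lemma meas_AE_LT:
  fixes f g :: "real \<Rightarrow> real"
  assumes g: "g \<in> borel_measurable (LT T)" and ae: "AE x in LT T. f x = g x"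
  shows "f \<in> borel_measurable (LT T)"
proof -
  have S: "{0..T} \<in> sets lebesgue" by simp
  have g': "(\<lambda>x. if x \<in> {0..T} then g x else 0) \<in> borel_measurable lebesgue"
    using borel_measurable_if[OF S] g by blast
  have "AE x in lebesgue. x \<in> {0..T} \<longrightarrow> f x = g x"
    using ae by (subst (asm) AE_restrict_space_iff) auto
  then have "AE x in lebesgue. (\<lambda>x. if x \<in> {0..T} then g x else 0) x = (\<lambda>x. if x \<in> {0..T} then f x else 0) x"
    by eventually_elim auto
  then have "(\<lambda>x. if x \<in> {0..T} then f x else 0) \<in> borel_measurable lebesgue"
    by (rule borel_measurable_AE[OF g'])
  then show ?thesis using borel_measurable_if[OF S] by blast
qed

lemma pair_B_LT: "(\<lambda>p. p) \<in> (borel \<Otimes>\<^sub>M LT T) \<rightarrow>\<^sub>M (borel :: (real \<times> real) measure)"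
proof -
  have "(\<lambda>p. (fst p, snd p)) \<in> ((borel::real measure) \<Otimes>\<^sub>M LT T) \<rightarrow>\<^sub>M ((borel::real measure) \<Otimes>\<^sub>M (borel::real measure))"
    by (intro measurable_Pair measurable_fst measurable_compose[OF measurable_snd id_LT])
  then show ?thesis by (simp add: borel_prod)
qed

lemma pair_LT_B: "(\<lambda>p. p) \<in> (LT T \<Otimes>\<^sub>M borel) \<rightarrow>\<^sub>M (borel :: (real \<times> real) measure)"
proof -
  have "(\<lambda>p. (fst p, snd p)) \<in> (LT T \<Otimes>\<^sub>M (borel::real measure)) \<rightarrow>\<^sub>M ((borel::real measure) \<Otimes>\<^sub>M (borel::real measure))"
    by (intro measurable_Pair measurable_snd measurable_compose[OF measurable_fst id_LT])
  then show ?thesis by (simp add: borel_prod)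
qed

lemma G1_exists:
  assumes T0: "T > 0" and kc: "kernel_class T G"
  shows "\<exists>G1 S1 S2. (\<lambda>(s,u). G1 s u) \<in> borel_measurable borel \<and> S1 \<ge> 0 \<and> S2 \<ge> 0 \<and>
     (\<forall>s. (\<integral>\<^sup>+u. ennreal ((G1 s u)\<^sup>2) \<partial>LT T) \<le> ennreal S1) \<and>
     (\<forall>u. (\<integral>\<^sup>+s. ennreal ((G1 s u)\<^sup>2) \<partial>LT T) \<le> ennreal S2) \<and>
     (\<forall>s u. G1 s u \<noteq> 0 \<longrightarrow> u < s) \<and>
     (AE s in LT T. AE u in LT T. G s u = G1 s u) \<and>
     (AE u in LT T. AE s in LT T. G s u = G1 s u)"
proof -
  note kc' = kc[unfolded kernel_class_def]
  have Gm: "(\<lambda>(t,s). G t s) \<in> borel_measurable (lebesgue_on ({0..T} \<times> {0..T}))" using kc' by blast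
  have volt: "\<And>t s. t \<in> {0..T} \<Longrightarrow> s \<in> {0..T} \<Longrightarrow> s \<ge> t \<Longrightarrow> G t s = 0" using kc' by blast
  define A1 where "A1 = (SUP t\<in>{0..T}. \<integral>\<^sup>+ s. ennreal ((G t s)\<^sup>2) \<partial>LT T)"
  define A2 where "A2 = (SUP s\<in>{0..T}. \<integral>\<^sup>+ t. ennreal ((G t s)\<^sup>2) \<partial>LT T)"
  have "A1 + A2 < \<infinity>" unfolding A1_def A2_def using kc' by blast
  then have A1f: "A1 < \<infinity>" and A2f: "A2 < \<infinity>" by (auto simp: top_unique)
  define S1 where "S1 = enn2real A1"
  define S2 where "S2 = enn2real A2"
  have A1e: "A1 = ennreal S1" unfolding S1_def using A1f by simp
  have A2e: "A2 = ennreal S2" unfolding S2_def using A2f by simp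
  have S1b: "(\<integral>\<^sup>+ u. ennreal ((G s u)\<^sup>2) \<partial>LT T) \<le> ennreal S1" if "s \<in> {0..T}" for s
    unfolding A1e[symmetric] A1_def using that by (intro SUP_upper) auto
  have S2b: "(\<integral>\<^sup>+ s. ennreal ((G s u)\<^sup>2) \<partial>LT T) \<le> ennreal S2" if "u \<in> {0..T}" for u
    unfolding A2e[symmetric] A2_def using that by (intro SUP_upper) auto
  define Q where "Q = ({0..T} \<times> {0..T} :: (real \<times> real) set)"
  have Qs: "Q \<in> sets lebesgue"
  proof -
    have "closed Q" unfolding Q_def by (intro closed_Times) auto
    then show ?thesis by simp
  qed
  define Gx where "Gx p = (if p \<in> Q then G (fst p) (snd p) else 0)" for p
  have "(\<lambda>p. G (fst p) (snd p)) \<in> borel_measurable (lebesgue_on Q)"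
    using Gm unfolding Q_def by (simp add: case_prod_beta')
  then have "Gx \<in> borel_measurable lebesgue"
    unfolding Gx_def by (rule borel_measurable_if_I[OF _ Qs])
  then obtain G0 where G0m: "G0 \<in> borel_measurable lborel" and G0ae: "AE p in lborel. Gx p = G0 p"
    using completion_ex_borel_measurable_real by blast
  have G0b[measurable]: "G0 \<in> borel_measurable borel" using G0m by simp
  from G0ae obtain N where N1: "{p \<in> space lborel. \<not> Gx p = G0 p} \<subseteq> N" and N2: "emeasure lborel N = 0"
    and N3: "N \<in> sets lborel" by (elim AE_E)
  have Nn: "N \<in> null_sets (lborel \<Otimes>\<^sub>M lborel)" using N2 N3 by (auto simp: lborel_prod)
  have N'[measurable]: "N \<in> sets (lborel \<Otimes>\<^sub>M lborel)" using Nn by auto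
  have notN: "Gx p = G0 p" if "p \<notin> N" for p using N1 that by auto
  have aeN: "AE p in lborel \<Otimes>\<^sub>M lborel. p \<notin> N" by (rule AE_not_in[OF Nn])
  have ae1: "AE s in lborel. AE u in lborel. (s, u) \<notin> N"
    using lborel_pair.AE_pair[OF aeN] .
  have "{x \<in> space (lborel \<Otimes>\<^sub>M lborel). (fst x, snd x) \<notin> N} = space (lborel \<Otimes>\<^sub>M lborel) - N"
    by auto
  then have "{x \<in> space (lborel \<Otimes>\<^sub>M lborel). (fst x, snd x) \<notin> N} \<in> sets (lborel \<Otimes>\<^sub>M (lborel::real measure))"
    using N' by (metis sets.compl_sets)
  from lborel_pair.AE_commute[OF this] ae1
  have ae2: "AE u in lborel. AE s in lborel. (s, u) \<notin> N" by simp
  have aeL1: "AE s in LT T. AE u in LT T. (s, u) \<notin> N"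
    by (rule AE_lborel_LT) (use ae1 in \<open>auto elim: AE_mp intro: AE_lborel_LT\<close>)
  have aeL2: "AE u in LT T. AE s in LT T. (s, u) \<notin> N"
    by (rule AE_lborel_LT) (use ae2 in \<open>auto elim: AE_mp intro: AE_lborel_LT\<close>)
  have eqG: "G s u = G0 (s, u)" if "(s, u) \<notin> N" "s \<in> {0..T}" "u \<in> {0..T}" for s u
    using notN[OF that(1)] that(2,3) unfolding Gx_def Q_def by simp
  define rg where "rg s \<longleftrightarrow> (\<integral>\<^sup>+u. ennreal ((G0 (s, u))\<^sup>2) \<partial>LT T) \<le> ennreal S1" for s
  define cg where "cg u \<longleftrightarrow> (\<integral>\<^sup>+s. ennreal ((G0 (s, u))\<^sup>2) \<partial>LT T) \<le> ennreal S2" for u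
  have sLT: "sigma_finite_measure (LT T)" using sigma_LT T0 by simp
  have rgm[measurable]: "Measurable.pred borel rg"
  proof -
    have h1: "(\<lambda>p. ennreal ((G0 p)\<^sup>2)) \<in> borel_measurable (borel :: (real \<times> real) measure)" by measurable
    have "(\<lambda>p. ennreal ((G0 p)\<^sup>2)) \<in> borel_measurable (borel \<Otimes>\<^sub>M LT T)"
      using measurable_compose[OF pair_B_LT h1] by simp
    then have "(\<lambda>s. \<integral>\<^sup>+u. ennreal ((G0 (s, u))\<^sup>2) \<partial>LT T) \<in> borel_measurable borel"
      using sigma_finite_measure.borel_measurable_nn_integral_fst[OF sLT] by blast
    then show ?thesis unfolding rg_def by measurable
  qed
  have cgm[measurable]: "Measurable.pred borel cg"
  proof -
    have "(\<lambda>p::real\<times>real. (snd p, fst p)) \<in> ((borel::real measure) \<Otimes>\<^sub>M (borel::real measure)) \<rightarrow>\<^sub>M ((borel::real measure) \<Otimes>\<^sub>M (borel::real measure))"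
      by (intro measurable_Pair measurable_snd measurable_fst)
    then have sw: "(\<lambda>p::real\<times>real. (snd p, fst p)) \<in> (borel::(real\<times>real) measure) \<rightarrow>\<^sub>M (borel::(real\<times>real) measure)"
      by (simp add: borel_prod)
    have h0[measurable]: "(\<lambda>p. G0 (snd p, fst p)) \<in> borel_measurable (borel :: (real \<times> real) measure)"
      using measurable_compose[OF sw G0b] by simp
    have h2: "(\<lambda>p. ennreal ((G0 (snd p, fst p))\<^sup>2)) \<in> borel_measurable (borel :: (real \<times> real) measure)" by measurable
    have "(\<lambda>p. ennreal ((G0 (snd p, fst p))\<^sup>2)) \<in> borel_measurable (borel \<Otimes>\<^sub>M LT T)"
      using measurable_compose[OF pair_B_LT h2] by simp
    then have "(\<lambda>u. \<integral>\<^sup>+s. ennreal ((G0 (s, u))\<^sup>2) \<partial>LT T) \<in> borel_measurable borel"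
      using sigma_finite_measure.borel_measurable_nn_integral_fst[OF sLT] by fastforce
    then show ?thesis unfolding cg_def by measurable
  qed
  have spLT: "AE x in LT T. x \<in> {0..T}" by (rule AE_I2) simp
  have aerg: "AE s in LT T. rg s"
    using aeL1 spLT
  proof eventually_elim
    case (elim s)
    have "AE u in LT T. ennreal ((G0 (s, u))\<^sup>2) = ennreal ((G s u)\<^sup>2)"
      using elim(1) spLT by eventually_elim (use elim(2) eqG in auto)
    then have "(\<integral>\<^sup>+u. ennreal ((G0 (s, u))\<^sup>2) \<partial>LT T) = (\<integral>\<^sup>+u. ennreal ((G s u)\<^sup>2) \<partial>LT T)"
      by (rule nn_integral_cong_AE)
    also have "\<dots> \<le> ennreal S1" using S1b elim(2) by simp
    finally show ?case unfolding rg_def .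
  qed
  have aecg: "AE u in LT T. cg u"
    using aeL2 spLT
  proof eventually_elim
    case (elim u)
    have "AE s in LT T. ennreal ((G0 (s, u))\<^sup>2) = ennreal ((G s u)\<^sup>2)"
      using elim(1) spLT by eventually_elim (use elim(2) eqG in auto)
    then have "(\<integral>\<^sup>+s. ennreal ((G0 (s, u))\<^sup>2) \<partial>LT T) = (\<integral>\<^sup>+s. ennreal ((G s u)\<^sup>2) \<partial>LT T)"
      by (rule nn_integral_cong_AE)
    also have "\<dots> \<le> ennreal S2" using S2b elim(2) by simp
    finally show ?case unfolding cg_def .
  qed
  define G1 where "G1 s u = (if s \<in> {0..T} \<and> u \<in> {0..T} \<and> u < s \<and> rg s \<and> cg u then G0 (s, u) else 0)" for s u
  have G1m: "(\<lambda>(s,u). G1 s u) \<in> borel_measurable borel"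
  proof -
    have G0p[measurable]: "G0 \<in> borel_measurable ((borel::real measure) \<Otimes>\<^sub>M (borel::real measure))"
      using G0b by (simp add: borel_prod)
    have "(\<lambda>p. if fst p \<in> {0..T} \<and> snd p \<in> {0..T} \<and> snd p < fst p \<and> rg (fst p) \<and> cg (snd p) then G0 p else 0)
          \<in> borel_measurable ((borel::real measure) \<Otimes>\<^sub>M (borel::real measure))"
      by measurable
    then have "(\<lambda>p. if fst p \<in> {0..T} \<and> snd p \<in> {0..T} \<and> snd p < fst p \<and> rg (fst p) \<and> cg (snd p) then G0 p else 0)
          \<in> borel_measurable (borel :: (real \<times> real) measure)"
      by (simp add: borel_prod)
    moreover have "(\<lambda>(s,u). G1 s u) = (\<lambda>p. if fst p \<in> {0..T} \<and> snd p \<in> {0..T} \<and> snd p < fst p \<and> rg (fst p) \<and> cg (snd p) then G0 p else 0)"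
      by (rule ext) (auto simp: G1_def split: prod.splits)
    ultimately show ?thesis by simp
  qed
  have S10: "S1 \<ge> 0" "S2 \<ge> 0" unfolding S1_def S2_def by auto
  have rowb: "(\<integral>\<^sup>+u. ennreal ((G1 s u)\<^sup>2) \<partial>LT T) \<le> ennreal S1" for s
  proof (cases "rg s")
    case True
    have "(\<integral>\<^sup>+u. ennreal ((G1 s u)\<^sup>2) \<partial>LT T) \<le> (\<integral>\<^sup>+u. ennreal ((G0 (s, u))\<^sup>2) \<partial>LT T)"
      by (intro nn_integral_mono ennreal_leI) (auto simp: G1_def)
    also have "\<dots> \<le> ennreal S1" using True unfolding rg_def .
    finally show ?thesis .
  next
    case False
    then have "(\<integral>\<^sup>+u. ennreal ((G1 s u)\<^sup>2) \<partial>LT T) = 0" by (simp add: G1_def)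
    then show ?thesis by simp
  qed
  have colb: "(\<integral>\<^sup>+s. ennreal ((G1 s u)\<^sup>2) \<partial>LT T) \<le> ennreal S2" for u
  proof (cases "cg u")
    case True
    have "(\<integral>\<^sup>+s. ennreal ((G1 s u)\<^sup>2) \<partial>LT T) \<le> (\<integral>\<^sup>+s. ennreal ((G0 (s, u))\<^sup>2) \<partial>LT T)"
      by (intro nn_integral_mono ennreal_leI) (auto simp: G1_def)
    also have "\<dots> \<le> ennreal S2" using True unfolding cg_def .
    finally show ?thesis .
  next
    case False
    then have "(\<integral>\<^sup>+s. ennreal ((G1 s u)\<^sup>2) \<partial>LT T) = 0" by (simp add: G1_def)
    then show ?thesis by simp
  qed
  have vol1: "\<forall>s u. G1 s u \<noteq> 0 \<longrightarrow> u < s" by (auto simp: G1_def)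
  have pt: "G s u = G1 s u" if "(s, u) \<notin> N" "s \<in> {0..T}" "u \<in> {0..T}" "rg s" "cg u" for s u
  proof (cases "u < s")
    case True then show ?thesis using that eqG by (simp add: G1_def)
  next
    case False then show ?thesis using that volt[of s u] by (simp add: G1_def)
  qed
  have ae1G: "AE s in LT T. AE u in LT T. G s u = G1 s u"
    using aeL1 aerg spLT
  proof eventually_elim
    case (elim s)
    show ?case using elim(1) aecg spLT by eventually_elim (use elim pt in auto)
  qed
  have ae2G: "AE u in LT T. AE s in LT T. G s u = G1 s u"
    using aeL2 aecg spLT
  proof eventually_elim
    case (elim u)
    show ?case using elim(1) aerg spLT by eventually_elim (use elim pt in auto)
  qed
  show ?thesis
    using G1m S10 rowb colb vol1 ae1G ae2G by blast
qed


lemma bor2: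
  fixes f :: "real \<Rightarrow> real \<Rightarrow> real"
  assumes "(\<lambda>p. f (fst p) (snd p)) \<in> borel_measurable ((borel::real measure) \<Otimes>\<^sub>M (borel::real measure))"
  shows "(\<lambda>(s,u). f s u) \<in> borel_measurable borel"
  using assms by (simp add: borel_prod case_prod_beta')

lemma goodk_transpose_meas:
  fixes K :: "real \<Rightarrow> real \<Rightarrow> real"
  assumes "(\<lambda>(s,u). K s u) \<in> borel_measurable borel"
  shows "(\<lambda>(s,u). K u s) \<in> borel_measurable borel"
proof -
  have "(\<lambda>p::real\<times>real. (snd p, fst p)) \<in> ((borel::real measure) \<Otimes>\<^sub>M (borel::real measure)) \<rightarrow>\<^sub>M ((borel::real measure) \<Otimes>\<^sub>M (borel::real measure))"
    by (intro measurable_Pair measurable_snd measurable_fst)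
  then have sw: "(\<lambda>p::real\<times>real. (snd p, fst p)) \<in> (borel::(real\<times>real) measure) \<rightarrow>\<^sub>M (borel::(real\<times>real) measure)"
    by (simp add: borel_prod)
  from measurable_compose[OF sw assms] show ?thesis by (simp add: case_prod_beta')
qed

lemma swap_int:
  assumes T0: "T \<ge> 0" and K: "goodk T K R" and Kt: "goodk T (\<lambda>s u. K u s) R'"
    and h: "L2T T h" and w: "L2T T w"
  shows "(\<integral>s. h s * kop T (\<lambda>s u. K u s) w s \<partial>LT T) = (\<integral>u. w u * kop T K h u \<partial>LT T)"
proof -
  interpret pair_sigma_finite "LT T" "LT T"
    using sigma_LT[OF T0] by (simp add: pair_sigma_finite_def)
  have [measurable]: "h \<in> borel_measurable (LT T)" "w \<in> borel_measurable (LT T)"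
    using h w by (auto simp: L2T_def)
  have Km: "(\<lambda>(s,u). K s u) \<in> borel_measurable (LT T \<Otimes>\<^sub>M LT T)"
    using ker_meas_pair K unfolding goodk_def by blast
  have Ktm: "(\<lambda>(s,u). K u s) \<in> borel_measurable (LT T \<Otimes>\<^sub>M LT T)"
    using ker_meas_pair Kt unfolding goodk_def by blast
  have [measurable]: "(\<lambda>p. K (snd p) (fst p)) \<in> borel_measurable (LT T \<Otimes>\<^sub>M LT T)"
    using Ktm by (simp add: case_prod_beta')
  define F where "F s u = h s * K u s * w u" for s u
  have Fm: "(\<lambda>p. F (fst p) (snd p)) \<in> borel_measurable (LT T \<Otimes>\<^sub>M LT T)"
    unfolding F_def by measurable
  have i2: "integrable (LT T) (\<lambda>u. F s u)" for s
    unfolding F_def using kop_integrable[OF Kt w, of s] by (simp add: mult.assoc)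
  have bnd: "(\<integral>u. norm (F s u) \<partial>LT T) \<le> \<bar>h s\<bar> * (sqrt R' * nrm T w)" for s
  proof -
    have "(\<integral>u. norm (F s u) \<partial>LT T) = \<bar>h s\<bar> * (\<integral>u. \<bar>K u s\<bar> * \<bar>w u\<bar> \<partial>LT T)"
      unfolding F_def by (simp add: abs_mult mult.assoc)
    also have "\<dots> \<le> \<bar>h s\<bar> * (sqrt R' * nrm T w)"
    proof (intro mult_left_mono)
      have "(\<integral>u. \<bar>K u s\<bar> * \<bar>w u\<bar> \<partial>LT T) \<le> \<bar>\<integral>u. \<bar>K u s\<bar> * \<bar>w u\<bar> \<partial>LT T\<bar>" by simp
      also have "\<dots> \<le> nrm T (\<lambda>u. \<bar>K u s\<bar>) * nrm T (\<lambda>u. \<bar>w u\<bar>)"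
        by (rule CS) (intro L2T_abs goodk_row_L2[OF Kt] w)+
      also have "\<dots> \<le> sqrt R' * nrm T w"
        unfolding nrm_abs by (intro mult_right_mono goodk_row_nrm[OF Kt] nrm_nonneg)
      finally show "(\<integral>u. \<bar>K u s\<bar> * \<bar>w u\<bar> \<partial>LT T) \<le> sqrt R' * nrm T w" .
    qed simp
    finally show ?thesis .
  qed
  have i1: "integrable (LT T) (\<lambda>s. \<integral>u. norm (F s u) \<partial>LT T)"
  proof (rule Bochner_Integration.integrable_bound)
    show "integrable (LT T) (\<lambda>s. \<bar>h s\<bar> * (sqrt R' * nrm T w))"
      using L2T_integrable[OF T0 h] by simp
    have "(\<lambda>(s,u). norm (F s u)) \<in> borel_measurable (LT T \<Otimes>\<^sub>M LT T)"
      using Fm by (simp add: case_prod_beta' borel_measurable_norm)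
    then show "(\<lambda>s. \<integral>u. norm (F s u) \<partial>LT T) \<in> borel_measurable (LT T)"
      by (rule sigma_finite_measure.borel_measurable_lebesgue_integral[OF sigma_LT[OF T0], where f="\<lambda>s u. norm (F s u)"])
    show "AE s in LT T. norm (\<integral>u. norm (F s u) \<partial>LT T) \<le> norm (\<bar>h s\<bar> * (sqrt R' * nrm T w))"
    proof (rule AE_I2)
      fix s
      have R'0: "R' \<ge> 0" using Kt by (simp add: goodk_def)
      have "norm (\<bar>h s\<bar> * (sqrt R' * nrm T w)) = \<bar>h s\<bar> * (sqrt R' * nrm T w)"
        using R'0 nrm_nonneg[of T w] by (simp add: abs_mult)
      moreover have "norm (\<integral>u. norm (F s u) \<partial>LT T) = (\<integral>u. norm (F s u) \<partial>LT T)" by simp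
      ultimately show "norm (\<integral>u. norm (F s u) \<partial>LT T) \<le> norm (\<bar>h s\<bar> * (sqrt R' * nrm T w))"
        using bnd[of s] by simp
    qed
  qed
  have intF: "integrable (LT T \<Otimes>\<^sub>M LT T) (\<lambda>(s,u). F s u)"
    using Fubini_integrable[of "\<lambda>p. F (fst p) (snd p)"] Fm i1 i2 by (simp add: case_prod_beta')
  have "(\<integral>s. h s * kop T (\<lambda>s u. K u s) w s \<partial>LT T) = (\<integral>s. (\<integral>u. F s u \<partial>LT T) \<partial>LT T)"
    unfolding kop_def F_def by (simp add: mult.assoc)
  also have "\<dots> = (\<integral>u. (\<integral>s. F s u \<partial>LT T) \<partial>LT T)"
    by (rule Fubini_integral[symmetric, OF intF])
  also have "\<dots> = (\<integral>u. w u * kop T K h u \<partial>LT T)"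
  proof -
    have "(\<integral>s. F s u \<partial>LT T) = w u * kop T K h u" for u
    proof -
      have "(\<integral>s. F s u \<partial>LT T) = (\<integral>s. w u * (K u s * h s) \<partial>LT T)"
        unfolding F_def by (rule Bochner_Integration.integral_cong) (auto simp: mult_ac)
      then show ?thesis by (simp add: kop_def)
    qed
    then show ?thesis by simp
  qed
  finally show ?thesis .
qed

lemma sym_int:
  assumes T0: "T \<ge> 0" and V: "goodk T V R" and Vt: "goodk T (\<lambda>s u. V u s) R'" and k: "L2T T k"
  shows "(\<integral>t. (\<integral>s. (V t s + V s t) * k s * k t \<partial>LT T) \<partial>LT T) = 2 * (\<integral>t. k t * kop T V k t \<partial>LT T)"
proof -
  have inner: "(\<integral>s. (V t s + V s t) * k s * k t \<partial>LT T) = k t * kop T V k t + k t * kop T (\<lambda>s u. V u s) k t" for t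
  proof -
    have "(\<integral>s. (V t s + V s t) * k s * k t \<partial>LT T) = (\<integral>s. k t * (V t s * k s) + k t * (V s t * k s) \<partial>LT T)"
      by (rule Bochner_Integration.integral_cong) (auto simp: algebra_simps)
    also have "\<dots> = k t * kop T V k t + k t * kop T (\<lambda>s u. V u s) k t"
      unfolding kop_def using kop_integrable[OF V k, of t] kop_integrable[OF Vt k, of t] by simp
    finally show ?thesis .
  qed
  have L1: "L2T T (kop T V k)" using kop_L2T(1)[OF T0 V k] .
  have L2: "L2T T (kop T (\<lambda>s u. V u s) k)" using kop_L2T(1)[OF T0 Vt k] .
  have "(\<integral>t. (\<integral>s. (V t s + V s t) * k s * k t \<partial>LT T) \<partial>LT T) =
        (\<integral>t. k t * kop T V k t \<partial>LT T) + (\<integral>t. k t * kop T (\<lambda>s u. V u s) k t \<partial>LT T)"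
    unfolding inner using L2T_mult_integrable[OF k L1] L2T_mult_integrable[OF k L2] by simp
  also have "(\<integral>t. k t * kop T (\<lambda>s u. V u s) k t \<partial>LT T) = (\<integral>t. k t * kop T V k t \<partial>LT T)"
    by (rule swap_int[OF T0 V Vt k k])
  finally show ?thesis by simp
qed

lemma ind_meas: "(\<lambda>(s::real,u::real). (if u < s then 1 else 0 :: real)) \<in> borel_measurable borel"
proof -
  have "(\<lambda>p. (\<lambda>s u. if u < s then 1 else 0 :: real) (fst p) (snd p)) \<in> borel_measurable ((borel::real measure) \<Otimes>\<^sub>M (borel::real measure))"
    by measurable
  from bor2[OF this] show ?thesis .
qed

lemma ind_pos:
  assumes T0: "T \<ge> 0" and k: "L2T T k"
  shows "(\<integral>t. (\<integral>s. ((if s < t then 1 else 0) + (if t < s then 1 else 0)) * k s * k t \<partial>LT T) \<partial>LT T) \<ge> 0"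
proof -
  have [measurable]: "k \<in> borel_measurable (LT T)" using k by (simp add: L2T_def)
  have ik: "integrable (LT T) k" by (rule L2T_integrable[OF T0 k])
  have inner: "(\<integral>s. ((if s < t then 1 else 0) + (if t < s then 1 else 0)) * k s * k t \<partial>LT T) = k t * (\<integral>s. k s \<partial>LT T)" for t
  proof -
    have ae: "AE s in LT T. s \<noteq> t" by (rule AE_lborel_LT) (rule AE_lborel_singleton)
    have "(\<integral>s. ((if s < t then 1 else 0) + (if t < s then 1 else 0)) * k s * k t \<partial>LT T) = (\<integral>s. k t * k s \<partial>LT T)"
      by (rule integral_cong_AE) (use ae in \<open>auto elim!: AE_mp\<close>)
    then show ?thesis by simp
  qed
  show ?thesis unfolding inner using ik by simp
qed


lemma meas_ind_ge: "(\<lambda>(s::real,u::real). (if t \<le> u then 1 else 0 :: real)) \<in> borel_measurable borel"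
proof -
  have "(\<lambda>p. (\<lambda>s u. if t \<le> u then 1 else 0 :: real) (fst p) (snd p)) \<in> borel_measurable ((borel::real measure) \<Otimes>\<^sub>M (borel::real measure))"
    by measurable
  from bor2[OF this] show ?thesis .
qed

lemma meas_ind_ge2: "(\<lambda>(s::real,u::real). (if t \<le> s then 1 else 0 :: real)) \<in> borel_measurable borel"
proof -
  have "(\<lambda>p. (\<lambda>s u. if t \<le> s then 1 else 0 :: real) (fst p) (snd p)) \<in> borel_measurable ((borel::real measure) \<Otimes>\<^sub>M (borel::real measure))"
    by measurable
  from bor2[OF this] show ?thesis .
qed

lemma meas_one_ker: "(\<lambda>(s,u). one_ker t s u) \<in> borel_measurable borel"
proof -
  have "(\<lambda>p. (\<lambda>s u. if s \<ge> u \<and> u \<ge> t then 1 else 0 :: real) (fst p) (snd p)) \<in> borel_measurable ((borel::real measure) \<Otimes>\<^sub>M (borel::real measure))"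
    by measurable
  from bor2[OF this] show ?thesis unfolding one_ker_def .
qed

lemma L2T_ind:
  assumes h: "L2T T h" shows "L2T T (\<lambda>u. h u * (if t \<le> u then 1 else 0))"
proof -
  have "(\<lambda>u. if t \<le> u then 1 else 0 :: real) \<in> borel_measurable borel" by measurable
  then have [measurable]: "(\<lambda>u. if t \<le> u then 1 else 0 :: real) \<in> borel_measurable (LT T)"
    using measurable_compose[OF id_LT] by blast
  have [measurable]: "h \<in> borel_measurable (LT T)" using h by (simp add: L2T_def)
  have m: "(\<lambda>u. h u * (if t \<le> u then 1 else 0)) \<in> borel_measurable (LT T)" by measurable
  have "integrable (LT T) (\<lambda>u. (h u * (if t \<le> u then 1 else 0))\<^sup>2)"
    by (rule Bochner_Integration.integrable_bound[OF L2T_sq[OF h]]) (use m in auto)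
  with m show ?thesis by (simp add: L2T_def)
qed

locale DS =
  fixes T lam \<phi> \<rho> :: real and G1 :: "real \<Rightarrow> real \<Rightarrow> real" and S1 S2 t :: real
  assumes T0: "T > 0" and lam0: "lam > 0" and phi0: "\<phi> \<ge> 0" and rho0: "\<rho> \<ge> 0"
    and G1m: "(\<lambda>(s,u). G1 s u) \<in> borel_measurable borel"
    and S1: "S1 \<ge> 0" and S2: "S2 \<ge> 0"
    and rowb: "\<And>s. (\<integral>\<^sup>+u. ennreal ((G1 s u)\<^sup>2) \<partial>LT T) \<le> ennreal S1"
    and colb: "\<And>u. (\<integral>\<^sup>+s. ennreal ((G1 s u)\<^sup>2) \<partial>LT T) \<le> ennreal S2"
    and volt: "\<And>s u. G1 s u \<noteq> 0 \<Longrightarrow> u < s"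
    and pos: "\<And>k. L2T T k \<Longrightarrow> 0 \<le> (\<integral>t. (\<integral>s. (G1 t s + G1 s t) * k s * k t \<partial>LT T) \<partial>LT T)"
begin

lemma T0': "T \<ge> 0" using T0 by simp

lemma gG1: "goodk T G1 S1"
  unfolding goodk_def using G1m S1 rowb by blast

lemma gG1t: "goodk T (\<lambda>s u. G1 u s) S2"
  unfolding goodk_def using goodk_transpose_meas[OF G1m] S2 colb by blast

lemma gI: "goodk T (\<lambda>s u. if u < s then 1 else 0) T"
  using goodk_bdd[OF T0' ind_meas, of 1] by simp

lemma gIt: "goodk T (\<lambda>s u. if s < u then 1 else 0) T"
  using goodk_bdd[OF T0' goodk_transpose_meas[OF ind_meas], of 1] by simp

lemma gI2: "goodk T (\<lambda>s u. 2 * \<rho> * (if u < s then 1 else 0)) ((2 * \<rho>)\<^sup>2 * T)"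
proof (rule goodk_bdd[OF T0'])
  show "(\<lambda>(s::real, u::real). 2 * \<rho> * (if u < s then 1 else 0)) \<in> borel_measurable borel"
    using borel_measurable_times[OF borel_measurable_const ind_meas, of "2*\<rho>"] by (simp add: case_prod_beta')
  show "\<bar>2 * \<rho> * (if u < s then 1 else 0)\<bar> \<le> 2 * \<rho>" for s u using rho0 by auto
qed

lemma gI2t: "goodk T (\<lambda>s u. 2 * \<rho> * (if s < u then 1 else 0)) ((2 * \<rho>)\<^sup>2 * T)"
proof (rule goodk_bdd[OF T0'])
  show "(\<lambda>(s::real, u::real). 2 * \<rho> * (if s < u then 1 else 0)) \<in> borel_measurable borel"
    using borel_measurable_times[OF borel_measurable_const goodk_transpose_meas[OF ind_meas], of "2*\<rho>"]
    by (simp add: case_prod_beta')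
  show "\<bar>2 * \<rho> * (if s < u then 1 else 0)\<bar> \<le> 2 * \<rho>" for s u using rho0 by auto
qed

definition "RV = 2 * ((2 * \<rho>)\<^sup>2 * T) + 2 * S1"
definition "RVt = 2 * ((2 * \<rho>)\<^sup>2 * T) + 2 * S2"

lemma Gt_eq: "Gtilde \<rho> G1 = (\<lambda>s u. 2 * \<rho> * (if u < s then 1 else 0) + G1 s u)"
  by (auto simp: Gtilde_def fun_eq_iff)

lemma gV: "goodk T (Gtilde \<rho> G1) RV"
  unfolding Gt_eq RV_def by (rule goodk_add[OF gI2 gG1])

lemma gVt: "goodk T (\<lambda>s u. Gtilde \<rho> G1 u s) RVt"
proof -
  have "(\<lambda>s u. Gtilde \<rho> G1 u s) = (\<lambda>s u. 2 * \<rho> * (if s < u then 1 else 0) + G1 u s)"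
    by (auto simp: Gtilde_def fun_eq_iff)
  then show ?thesis unfolding RVt_def using goodk_add[OF gI2t gG1t] by simp
qed

lemma gK: "goodk T (Gt_ker \<rho> G1 t) RV"
proof -
  have "Gt_ker \<rho> G1 t = (\<lambda>s u. Gtilde \<rho> G1 s u * (if t \<le> u then 1 else 0))"
    by (auto simp: Gt_ker_def fun_eq_iff)
  then show ?thesis using goodk_mult_ind[OF gV meas_ind_ge] by simp
qed

lemma gKt: "goodk T (\<lambda>s u. Gt_ker \<rho> G1 t u s) RVt"
proof -
  have "(\<lambda>s u. Gt_ker \<rho> G1 t u s) = (\<lambda>s u. Gtilde \<rho> G1 u s * (if t \<le> s then 1 else 0))"
    by (auto simp: Gt_ker_def fun_eq_iff)
  then show ?thesis using goodk_mult_ind[OF gVt meas_ind_ge2] by simp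
qed

lemma gE: "goodk T (one_ker t) T"
proof -
  have "goodk T (\<lambda>s u. one_ker t s u) (1\<^sup>2 * T)"
    by (rule goodk_bdd[OF T0' meas_one_ker]) (simp add: one_ker_def)
  then show ?thesis by simp
qed

lemma gEt: "goodk T (\<lambda>s u. one_ker t u s) T"
proof -
  have "goodk T (\<lambda>s u. one_ker t u s) (1\<^sup>2 * T)"
    by (rule goodk_bdd[OF T0' goodk_transpose_meas[OF meas_one_ker]]) (simp add: one_ker_def)
  then show ?thesis by simp
qed

lemma one_op_L2: "L2T T h \<Longrightarrow> L2T T (one_op T t h)"
  unfolding one_op_def by (rule kop_L2T(1)[OF T0' gE])

lemma one_op_nrm: "L2T T h \<Longrightarrow> nrm T (one_op T t h) \<le> T * nrm T h"
  unfolding one_op_def using kop_L2T(2)[OF T0' gE] T0' by (simp add: real_sqrt_mult_self)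

lemma one_adj_L2: "L2T T h \<Longrightarrow> L2T T (one_adj T t h)"
  unfolding one_adj_def by (rule kop_L2T(1)[OF T0' gEt])

lemma one_adj_nrm: "L2T T h \<Longrightarrow> nrm T (one_adj T t h) \<le> T * nrm T h"
  unfolding one_adj_def using kop_L2T(2)[OF T0' gEt] T0' by (simp add: real_sqrt_mult_self)

abbreviation "D1 \<equiv> D_op T lam \<phi> \<rho> G1 t"

lemma D1_L2: assumes h: "L2T T h" shows "L2T T (D1 h)"
  unfolding D_op_def
  by (intro L2T_add L2T_scale h kop_L2T(1)[OF T0' gK] kop_L2T(1)[OF T0' gKt] one_adj_L2 one_op_L2)

definition "Mb = 2 * lam + sqrt (T * RV) + sqrt (T * RVt) + 2 * \<phi> * (T * T)"

lemma D1_bnd: assumes h: "L2T T h" shows "nrm T (D1 h) \<le> Mb * nrm T h"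
proof -
  have a: "L2T T (\<lambda>s. 2 * lam * h s)" by (intro L2T_scale h)
  have b: "L2T T (kop T (Gt_ker \<rho> G1 t) h)" by (rule kop_L2T(1)[OF T0' gK h])
  have c: "L2T T (kop T (\<lambda>s u. Gt_ker \<rho> G1 t u s) h)" by (rule kop_L2T(1)[OF T0' gKt h])
  have d: "L2T T (\<lambda>s. 2 * \<phi> * one_adj T t (one_op T t h) s)" by (intro L2T_scale one_adj_L2 one_op_L2 h)
  have "nrm T (D1 h) \<le> nrm T (\<lambda>s. 2 * lam * h s + kop T (Gt_ker \<rho> G1 t) h s + kop T (\<lambda>s u. Gt_ker \<rho> G1 t u s) h s)
        + nrm T (\<lambda>s. 2 * \<phi> * one_adj T t (one_op T t h) s)"
    unfolding D_op_def by (intro nrm_triangle L2T_add a b c d)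
  also have "\<dots> \<le> (nrm T (\<lambda>s. 2 * lam * h s + kop T (Gt_ker \<rho> G1 t) h s) + nrm T (kop T (\<lambda>s u. Gt_ker \<rho> G1 t u s) h))
        + nrm T (\<lambda>s. 2 * \<phi> * one_adj T t (one_op T t h) s)"
    by (intro add_right_mono nrm_triangle L2T_add a b c)
  also have "\<dots> \<le> ((nrm T (\<lambda>s. 2 * lam * h s) + nrm T (kop T (Gt_ker \<rho> G1 t) h)) + nrm T (kop T (\<lambda>s u. Gt_ker \<rho> G1 t u s) h))
        + nrm T (\<lambda>s. 2 * \<phi> * one_adj T t (one_op T t h) s)"
    by (intro add_right_mono nrm_triangle a b)
  also have "\<dots> \<le> ((2 * lam * nrm T h + sqrt (T * RV) * nrm T h) + sqrt (T * RVt) * nrm T h) + 2 * \<phi> * (T * (T * nrm T h))"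
  proof (intro add_mono)
    show "nrm T (\<lambda>s. 2 * lam * h s) \<le> 2 * lam * nrm T h" using lam0 by (simp add: nrm_scale)
    show "nrm T (kop T (Gt_ker \<rho> G1 t) h) \<le> sqrt (T * RV) * nrm T h" by (rule kop_L2T(2)[OF T0' gK h])
    show "nrm T (kop T (\<lambda>s u. Gt_ker \<rho> G1 t u s) h) \<le> sqrt (T * RVt) * nrm T h" by (rule kop_L2T(2)[OF T0' gKt h])
    have "nrm T (\<lambda>s. 2 * \<phi> * one_adj T t (one_op T t h) s) = 2 * \<phi> * nrm T (one_adj T t (one_op T t h))"
      using phi0 by (simp add: nrm_scale)
    also have "\<dots> \<le> 2 * \<phi> * (T * nrm T (one_op T t h))"
      using phi0 by (intro mult_left_mono one_adj_nrm one_op_L2 h) auto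
    also have "\<dots> \<le> 2 * \<phi> * (T * (T * nrm T h))"
      using phi0 T0' by (intro mult_left_mono one_op_nrm h) auto
    finally show "nrm T (\<lambda>s. 2 * \<phi> * one_adj T t (one_op T t h) s) \<le> 2 * \<phi> * (T * (T * nrm T h))" .
  qed
  also have "\<dots> = Mb * nrm T h" unfolding Mb_def by (simp add: algebra_simps)
  finally show ?thesis .
qed

lemma one_op_lin:
  assumes "L2T T f" "L2T T g"
  shows "one_op T t (\<lambda>u. a * f u + b * g u) = (\<lambda>s. a * one_op T t f s + b * one_op T t g s)"
  unfolding one_op_def using kop_lin[OF gE assms] by auto

lemma D1_lin:
  assumes f: "L2T T f" and g: "L2T T g"
  shows "D1 (\<lambda>s. a * f s + b * g s) = (\<lambda>s. a * D1 f s + b * D1 g s)"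
proof (rule ext)
  fix s
  have k1: "kop T (Gt_ker \<rho> G1 t) (\<lambda>u. a * f u + b * g u) s = a * kop T (Gt_ker \<rho> G1 t) f s + b * kop T (Gt_ker \<rho> G1 t) g s"
    by (rule kop_lin[OF gK f g])
  have k2: "kop T (\<lambda>s u. Gt_ker \<rho> G1 t u s) (\<lambda>u. a * f u + b * g u) s = a * kop T (\<lambda>s u. Gt_ker \<rho> G1 t u s) f s + b * kop T (\<lambda>s u. Gt_ker \<rho> G1 t u s) g s"
    by (rule kop_lin[OF gKt f g])
  have k3: "one_adj T t (one_op T t (\<lambda>u. a * f u + b * g u)) s = a * one_adj T t (one_op T t f) s + b * one_adj T t (one_op T t g) s"
    unfolding one_op_lin[OF f g] one_adj_def by (rule kop_lin[OF gEt one_op_L2[OF f] one_op_L2[OF g]])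
  show "D1 (\<lambda>s. a * f s + b * g s) s = a * D1 f s + b * D1 g s"
    unfolding D_op_def using k1 k2 k3 by (simp add: algebra_simps)
qed

lemma K_pos: assumes h: "L2T T h" shows "0 \<le> (\<integral>s. h s * kop T (Gt_ker \<rho> G1 t) h s \<partial>LT T)"
proof -
  define k where "k u = h u * (if t \<le> u then 1 else 0)" for u
  have k: "L2T T k" unfolding k_def by (rule L2T_ind[OF h])
  define V where "V = Gtilde \<rho> G1"
  have pw: "h s * kop T (Gt_ker \<rho> G1 t) h s = k s * kop T V k s" for s
  proof (cases "t \<le> s")
    case True
    have "kop T (Gt_ker \<rho> G1 t) h s = kop T V k s"
      unfolding kop_def V_def k_def by (rule Bochner_Integration.integral_cong) (auto simp: Gt_ker_def)
    then show ?thesis using True by (simp add: k_def)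
  next
    case False
    have z: "Gt_ker \<rho> G1 t s u = 0" for u
    proof (cases "t \<le> u")
      case True
      then have "\<not> u < s" using False by simp
      then have "G1 s u = 0" using volt by blast
      then show ?thesis using True \<open>\<not> u < s\<close> by (simp add: Gt_ker_def Gtilde_def)
    qed (simp add: Gt_ker_def)
    have "kop T (Gt_ker \<rho> G1 t) h s = 0" unfolding kop_def by (simp add: z)
    then show ?thesis using False by (simp add: k_def)
  qed
  have kV: "kop T V k s = 2 * \<rho> * kop T (\<lambda>s u. if u < s then 1 else 0) k s + kop T G1 k s" for s
  proof -
    have "kop T V k s = kop T (\<lambda>s u. 2 * \<rho> * (if u < s then 1 else 0)) k s + kop T G1 k s"
      unfolding V_def Gt_eq by (rule kop_add_ker[OF gI2 gG1 k])
    also have "kop T (\<lambda>s u. 2 * \<rho> * (if u < s then 1 else 0)) k s = 2 * \<rho> * kop T (\<lambda>s u. if u < s then 1 else 0) k s"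
      by (rule kop_scale_ker)
    finally show ?thesis .
  qed
  have LI: "L2T T (kop T (\<lambda>s u. if u < s then 1 else 0) k)" by (rule kop_L2T(1)[OF T0' gI k])
  have LG: "L2T T (kop T G1 k)" by (rule kop_L2T(1)[OF T0' gG1 k])
  have "(\<integral>s. h s * kop T (Gt_ker \<rho> G1 t) h s \<partial>LT T) = (\<integral>s. k s * kop T V k s \<partial>LT T)"
    by (simp add: pw)
  also have "\<dots> = (\<integral>s. 2 * \<rho> * (k s * kop T (\<lambda>s u. if u < s then 1 else 0) k s) + k s * kop T G1 k s \<partial>LT T)"
    by (rule Bochner_Integration.integral_cong) (auto simp: kV algebra_simps)
  also have "\<dots> = 2 * \<rho> * (\<integral>s. k s * kop T (\<lambda>s u. if u < s then 1 else 0) k s \<partial>LT T) + (\<integral>s. k s * kop T G1 k s \<partial>LT T)"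
    using L2T_mult_integrable[OF k LI] L2T_mult_integrable[OF k LG] by simp
  also have "\<dots> \<ge> 0"
  proof -
    have "(\<integral>t. (\<integral>s. ((if s < t then 1 else 0) + (if t < s then 1 else 0)) * k s * k t \<partial>LT T) \<partial>LT T)
          = 2 * (\<integral>s. k s * kop T (\<lambda>s u. if u < s then 1 else 0) k s \<partial>LT T)"
      using sym_int[OF T0' gI gIt k] by simp
    then have i1: "0 \<le> (\<integral>s. k s * kop T (\<lambda>s u. if u < s then 1 else 0) k s \<partial>LT T)"
      using ind_pos[OF T0' k] by simp
    have "(\<integral>t. (\<integral>s. (G1 t s + G1 s t) * k s * k t \<partial>LT T) \<partial>LT T) = 2 * (\<integral>s. k s * kop T G1 k s \<partial>LT T)"
      using sym_int[OF T0' gG1 gG1t k] by simp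
    then have i2: "0 \<le> (\<integral>s. k s * kop T G1 k s \<partial>LT T)" using pos[OF k] by simp
    show ?thesis using i1 i2 rho0 by simp
  qed
  finally show ?thesis .
qed

lemma D1_coer: assumes h: "L2T T h" shows "2 * lam * (nrm T h)\<^sup>2 \<le> (\<integral>s. h s * D1 h s \<partial>LT T)"
proof -
  define w where "w = one_op T t h"
  have w: "L2T T w" unfolding w_def by (rule one_op_L2[OF h])
  have b: "L2T T (kop T (Gt_ker \<rho> G1 t) h)" by (rule kop_L2T(1)[OF T0' gK h])
  have c: "L2T T (kop T (\<lambda>s u. Gt_ker \<rho> G1 t u s) h)" by (rule kop_L2T(1)[OF T0' gKt h])
  have d: "L2T T (one_adj T t w)" by (rule one_adj_L2[OF w])
  have "(\<integral>s. h s * D1 h s \<partial>LT T) = (\<integral>s. 2 * lam * (h s)\<^sup>2 + h s * kop T (Gt_ker \<rho> G1 t) h s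
      + h s * kop T (\<lambda>s u. Gt_ker \<rho> G1 t u s) h s + 2 * \<phi> * (h s * one_adj T t w s) \<partial>LT T)"
    unfolding D_op_def w_def by (rule Bochner_Integration.integral_cong) (auto simp: algebra_simps power2_eq_square)
  also have "\<dots> = 2 * lam * (\<integral>s. (h s)\<^sup>2 \<partial>LT T) + (\<integral>s. h s * kop T (Gt_ker \<rho> G1 t) h s \<partial>LT T)
      + (\<integral>s. h s * kop T (\<lambda>s u. Gt_ker \<rho> G1 t u s) h s \<partial>LT T) + 2 * \<phi> * (\<integral>s. h s * one_adj T t w s \<partial>LT T)"
    using L2T_sq[OF h] L2T_mult_integrable[OF h b] L2T_mult_integrable[OF h c] L2T_mult_integrable[OF h d]
    by simp
  also have "(\<integral>s. h s * kop T (\<lambda>s u. Gt_ker \<rho> G1 t u s) h s \<partial>LT T) = (\<integral>s. h s * kop T (Gt_ker \<rho> G1 t) h s \<partial>LT T)"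
    using swap_int[OF T0' gK gKt h h] by simp
  also have "(\<integral>s. h s * one_adj T t w s \<partial>LT T) = (\<integral>u. w u * w u \<partial>LT T)"
    unfolding one_adj_def using swap_int[OF T0' gE gEt h w] by (simp add: w_def one_op_def)
  finally have e: "(\<integral>s. h s * D1 h s \<partial>LT T) = 2 * lam * (nrm T h)\<^sup>2 + 2 * (\<integral>s. h s * kop T (Gt_ker \<rho> G1 t) h s \<partial>LT T)
      + 2 * \<phi> * (\<integral>u. w u * w u \<partial>LT T)"
    by (simp add: nrm_sq)
  have "0 \<le> (\<integral>u. w u * w u \<partial>LT T)" by simp
  then show ?thesis unfolding e using K_pos[OF h] phi0 by simp
qed

end


lemma int_cong_AE_LT:
  fixes f g :: "real \<Rightarrow> real"
  assumes "integrable (LT T) g" "AE x in LT T. f x = g x"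
  shows "(\<integral>x. f x \<partial>LT T) = (\<integral>x. g x \<partial>LT T)"
proof -
  have gm: "g \<in> borel_measurable (LT T)" using assms(1) by (rule borel_measurable_integrable)
  have fm: "f \<in> borel_measurable (LT T)" by (rule meas_AE_LT[OF gm assms(2)])
  show ?thesis by (rule integral_cong_AE[OF fm gm assms(2)])
qed

context DS
begin

lemma D_transfer:
  assumes ae1: "AE s in LT T. AE u in LT T. G s u = G1 s u"
    and ae2: "AE u in LT T. AE s in LT T. G s u = G1 s u"
    and h: "L2T T h"
  shows "AE s in LT T. D_op T lam \<phi> \<rho> G t h s = D1 h s"
proof -
  have A: "AE s in LT T. kop T (Gt_ker \<rho> G t) h s = kop T (Gt_ker \<rho> G1 t) h s"
    using ae1
  proof eventually_elim
    case (elim s)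
    have "AE u in LT T. Gt_ker \<rho> G t s u * h u = Gt_ker \<rho> G1 t s u * h u"
      using elim by eventually_elim (simp add: Gt_ker_def Gtilde_def)
    then show ?case unfolding kop_def by (rule int_cong_AE_LT[OF kop_integrable[OF gK h]])
  qed
  have B: "AE s in LT T. kop T (\<lambda>s u. Gt_ker \<rho> G t u s) h s = kop T (\<lambda>s u. Gt_ker \<rho> G1 t u s) h s"
    using ae2
  proof eventually_elim
    case (elim s)
    have "AE u in LT T. Gt_ker \<rho> G t u s * h u = Gt_ker \<rho> G1 t u s * h u"
      using elim by eventually_elim (simp add: Gt_ker_def Gtilde_def)
    then show ?case unfolding kop_def by (rule int_cong_AE_LT[OF kop_integrable[OF gKt h]])
  qed
  show ?thesis using A B by eventually_elim (simp add: D_op_def)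
qed

lemma Dinv_props:
  assumes ae1: "AE s in LT T. AE u in LT T. G s u = G1 s u"
    and ae2: "AE u in LT T. AE s in LT T. G s u = G1 s u"
    and f: "L2T T f"
  shows "L2T T (D_inv T lam \<phi> \<rho> G t f)" "nrm T (D_inv T lam \<phi> \<rho> G t f) \<le> nrm T f / (2 * lam)"
proof -
  have c0: "0 < 2 * lam" using lam0 by simp
  have ex0: "\<exists>g. L2T T g \<and> (AE s in LT T. D1 g s = f s)"
    by (rule exist_solution[where Dop=D1 and Mb=Mb, OF T0' D1_L2 D1_bnd D1_coer c0 D1_lin f])
  obtain g0 where g0: "L2T T g0" "AE s in LT T. D1 g0 s = f s"
    using ex0 by blast
  have "AE s in LT T. D_op T lam \<phi> \<rho> G t g0 s = f s"
    using D_transfer[OF ae1 ae2 g0(1)] g0(2) by eventually_elim simp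
  then have ex: "\<exists>g. L2T T g \<and> (AE s in LT T. D_op T lam \<phi> \<rho> G t g s = f s)" using g0(1) by blast
  define g where "g = D_inv T lam \<phi> \<rho> G t f"
  have gp: "L2T T g \<and> (AE s in LT T. D_op T lam \<phi> \<rho> G t g s = f s)"
    unfolding g_def D_inv_def by (rule someI_ex[OF ex])
  then have g: "L2T T g" by blast
  have "AE s in LT T. D1 g s = f s"
    using D_transfer[OF ae1 ae2 g] gp[THEN conjunct2] by eventually_elim simp
  then have eq: "(\<integral>s. g s * D1 g s \<partial>LT T) = (\<integral>s. g s * f s \<partial>LT T)"
    by (intro int_cong_AE_LT L2T_mult_integrable g f) (auto elim: AE_mp)
  have "2 * lam * (nrm T g)\<^sup>2 \<le> (\<integral>s. g s * f s \<partial>LT T)" using D1_coer[OF g] eq by simp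
  also have "\<dots> \<le> nrm T g * nrm T f" using CS[OF g f] by simp
  finally have i: "2 * lam * (nrm T g)\<^sup>2 \<le> nrm T g * nrm T f" .
  have "nrm T g \<le> nrm T f / (2 * lam)"
  proof (cases "nrm T g = 0")
    case True then show ?thesis using lam0 nrm_nonneg[of T f] by simp
  next
    case False
    then have p: "nrm T g > 0" using nrm_nonneg[of T g] by simp
    from i have "(2 * lam * nrm T g) * nrm T g \<le> nrm T f * nrm T g" by (simp add: power2_eq_square mult_ac)
    then have "2 * lam * nrm T g \<le> nrm T f" using p by simp
    then show ?thesis using lam0 by (simp add: field_simps)
  qed
  then show "L2T T (D_inv T lam \<phi> \<rho> G t f)" "nrm T (D_inv T lam \<phi> \<rho> G t f) \<le> nrm T f / (2 * lam)"
    using g unfolding g_def by auto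
qed

definition "CC = (1 / (2 * lam) + 2 * \<phi> * T / (2 * lam)) + (2 * \<phi> * T / (2 * lam) + 2 * \<phi> + 4 * \<phi>\<^sup>2 * T * T / (2 * lam))"

lemma Gamma_bnd:
  assumes ae1: "AE s in LT T. AE u in LT T. G s u = G1 s u"
    and ae2: "AE u in LT T. AE s in LT T. G s u = G1 s u"
    and f1: "L2T T f1" and f2: "L2T T f2" and n1: "nrm T f1 \<le> 1" and n2: "nrm T f2 \<le> 1"
  shows "L2norm2 T (Gamma_inv T lam \<phi> \<rho> G t (f1, f2)) \<le> CC"
proof -
  define A1 where "A1 = D_inv T lam \<phi> \<rho> G t f1"
  define A2 where "A2 = D_inv T lam \<phi> \<rho> G t (one_adj T t f2)"
  have w: "L2T T (one_adj T t f2)" by (rule one_adj_L2[OF f2])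
  have A1L: "L2T T A1" and A1n: "nrm T A1 \<le> nrm T f1 / (2 * lam)"
    unfolding A1_def using Dinv_props[OF ae1 ae2 f1] by auto
  have A2L: "L2T T A2" and A2n: "nrm T A2 \<le> nrm T (one_adj T t f2) / (2 * lam)"
    unfolding A2_def using Dinv_props[OF ae1 ae2 w] by auto
  have l2: "2 * lam > 0" using lam0 by simp
  have A1b: "nrm T A1 \<le> 1 / (2 * lam)"
    using A1n n1 l2 by (meson divide_right_mono less_imp_le order_trans)
  have A2b: "nrm T A2 \<le> T / (2 * lam)"
  proof -
    have "nrm T (one_adj T t f2) \<le> T * nrm T f2" by (rule one_adj_nrm[OF f2])
    also have "\<dots> \<le> T" using n2 T0' by (simp add: mult_left_le)
    finally show ?thesis using A2n l2 by (meson divide_right_mono less_imp_le order_trans)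
  qed
  have OA1: "nrm T (one_op T t A1) \<le> T / (2 * lam)"
  proof -
    have "nrm T (one_op T t A1) \<le> T * nrm T A1" by (rule one_op_nrm[OF A1L])
    also have "\<dots> \<le> T * (1 / (2 * lam))" using A1b T0' by (intro mult_left_mono) auto
    finally show ?thesis by simp
  qed
  have OA2: "nrm T (one_op T t A2) \<le> T * T / (2 * lam)"
  proof -
    have "nrm T (one_op T t A2) \<le> T * nrm T A2" by (rule one_op_nrm[OF A2L])
    also have "\<dots> \<le> T * (T / (2 * lam))" using A2b T0' by (intro mult_left_mono) auto
    finally show ?thesis by simp
  qed
  define a where "a = (\<lambda>s. A1 s + (- 2 * \<phi>) * A2 s)"
  define b where "b = (\<lambda>s. (- 2 * \<phi>) * one_op T t A1 s + ((- 2 * \<phi>) * f2 s + (4 * \<phi>\<^sup>2) * one_op T t A2 s))"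
  have Ge: "Gamma_inv T lam \<phi> \<rho> G t (f1, f2) = (a, b)"
    unfolding Gamma_inv_def Let_def a_def b_def A1_def A2_def by (simp add: fun_eq_iff)
  have na: "nrm T a \<le> 1 / (2 * lam) + 2 * \<phi> * T / (2 * lam)"
  proof -
    have "nrm T a \<le> nrm T A1 + nrm T (\<lambda>s. (- 2 * \<phi>) * A2 s)"
      unfolding a_def by (intro nrm_triangle A1L L2T_scale A2L)
    also have "\<dots> = nrm T A1 + 2 * \<phi> * nrm T A2" by (simp only: nrm_scale) (use phi0 in simp)
    also have "\<dots> \<le> 1 / (2 * lam) + 2 * \<phi> * (T / (2 * lam))"
      using A1b A2b phi0 by (intro add_mono mult_left_mono) auto
    finally show ?thesis by simp
  qed
  have nb: "nrm T b \<le> 2 * \<phi> * T / (2 * lam) + 2 * \<phi> + 4 * \<phi>\<^sup>2 * T * T / (2 * lam)"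
  proof -
    have L1: "L2T T (\<lambda>s. (- 2 * \<phi>) * one_op T t A1 s)" by (intro L2T_scale one_op_L2 A1L)
    have L2: "L2T T (\<lambda>s. (- 2 * \<phi>) * f2 s)" by (intro L2T_scale f2)
    have L3: "L2T T (\<lambda>s. (4 * \<phi>\<^sup>2) * one_op T t A2 s)" by (intro L2T_scale one_op_L2 A2L)
    have "nrm T b \<le> nrm T (\<lambda>s. (- 2 * \<phi>) * one_op T t A1 s) + nrm T (\<lambda>s. (- 2 * \<phi>) * f2 s + (4 * \<phi>\<^sup>2) * one_op T t A2 s)"
      unfolding b_def by (intro nrm_triangle L1 L2T_add L2 L3)
    also have "\<dots> \<le> nrm T (\<lambda>s. (- 2 * \<phi>) * one_op T t A1 s) + (nrm T (\<lambda>s. (- 2 * \<phi>) * f2 s) + nrm T (\<lambda>s. (4 * \<phi>\<^sup>2) * one_op T t A2 s))"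
      by (intro add_left_mono nrm_triangle L2 L3)
    also have "\<dots> = 2 * \<phi> * nrm T (one_op T t A1) + (2 * \<phi> * nrm T f2 + 4 * \<phi>\<^sup>2 * nrm T (one_op T t A2))"
      by (simp only: nrm_scale) (use phi0 in simp)
    also have "\<dots> \<le> 2 * \<phi> * (T / (2 * lam)) + (2 * \<phi> * 1 + 4 * \<phi>\<^sup>2 * (T * T / (2 * lam)))"
      using OA1 OA2 n2 phi0 by (intro add_mono mult_left_mono) auto
    finally show ?thesis by simp
  qed
  have "L2norm2 T (a, b) = sqrt ((nrm T a)\<^sup>2 + (nrm T b)\<^sup>2)"
    unfolding L2norm2_def by (simp add: nrm_sq)
  also have "\<dots> \<le> sqrt ((nrm T a)\<^sup>2) + sqrt ((nrm T b)\<^sup>2)" by (rule sqrt_add_le_add_sqrt) auto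
  also have "\<dots> = nrm T a + nrm T b" by (simp add: nrm_nonneg)
  also have "\<dots> \<le> CC" unfolding CC_def using na nb by (intro add_mono)
  finally show ?thesis unfolding Ge .
qed

end

lemma pos_transfer:
  assumes T0: "T > 0" and kc: "kernel_class T G"
    and G1m: "(\<lambda>(s,u). G1 s u) \<in> borel_measurable borel"
    and rowb: "\<And>s. (\<integral>\<^sup>+u. ennreal ((G1 s u)\<^sup>2) \<partial>LT T) \<le> ennreal S1" and S1: "S1 \<ge> 0"
    and colb: "\<And>u. (\<integral>\<^sup>+s. ennreal ((G1 s u)\<^sup>2) \<partial>LT T) \<le> ennreal S2" and S2: "S2 \<ge> 0"
    and ae1: "AE s in LT T. AE u in LT T. G s u = G1 s u"
    and ae2: "AE u in LT T. AE s in LT T. G s u = G1 s u"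
    and k: "L2T T k"
  shows "0 \<le> (\<integral>t. (\<integral>s. (G1 t s + G1 s t) * k s * k t \<partial>LT T) \<partial>LT T)"
proof -
  have T0': "T \<ge> 0" using T0 by simp
  have g1: "goodk T G1 S1" unfolding goodk_def using G1m S1 rowb by simp
  have g2: "goodk T (\<lambda>s u. G1 u s) S2" unfolding goodk_def using goodk_transpose_meas[OF G1m] S2 colb by simp
  have posG: "0 \<le> (\<integral>t. (\<integral>s. (G t s + G s t) * k s * k t \<partial>LT T) \<partial>LT T)"
    using kc[unfolded kernel_class_def, THEN conjunct2, THEN conjunct2, THEN conjunct2, THEN conjunct1, rule_format, OF k] .
  have inti: "integrable (LT T) (\<lambda>s. (G1 t s + G1 s t) * k s * k t)" for t
  proof -
    have "(\<lambda>s. (G1 t s + G1 s t) * k s * k t) = (\<lambda>s. k t * (G1 t s * k s) + k t * (G1 s t * k s))"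
      by (auto simp: algebra_simps)
    then show ?thesis using kop_integrable[OF g1 k, of t] kop_integrable[OF g2 k, of t] by simp
  qed
  have "AE t in LT T. (\<integral>s. (G t s + G s t) * k s * k t \<partial>LT T) = (\<integral>s. (G1 t s + G1 s t) * k s * k t \<partial>LT T)"
    using ae1 ae2
  proof eventually_elim
    case (elim t)
    have "AE s in LT T. (G t s + G s t) * k s * k t = (G1 t s + G1 s t) * k s * k t"
      using elim by eventually_elim simp
    then show ?case by (rule int_cong_AE_LT[OF inti])
  qed
  moreover have "integrable (LT T) (\<lambda>t. (\<integral>s. (G1 t s + G1 s t) * k s * k t \<partial>LT T))"
  proof -
    have "(\<lambda>t. (\<integral>s. (G1 t s + G1 s t) * k s * k t \<partial>LT T)) = (\<lambda>t. k t * kop T G1 k t + k t * kop T (\<lambda>s u. G1 u s) k t)"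
    proof
      fix t
      have "(\<integral>s. (G1 t s + G1 s t) * k s * k t \<partial>LT T) = (\<integral>s. k t * (G1 t s * k s) + k t * (G1 s t * k s) \<partial>LT T)"
        by (rule Bochner_Integration.integral_cong) (auto simp: algebra_simps)
      also have "\<dots> = k t * kop T G1 k t + k t * kop T (\<lambda>s u. G1 u s) k t"
        unfolding kop_def using kop_integrable[OF g1 k, of t] kop_integrable[OF g2 k, of t] by simp
      finally show "(\<integral>s. (G1 t s + G1 s t) * k s * k t \<partial>LT T) = k t * kop T G1 k t + k t * kop T (\<lambda>s u. G1 u s) k t" .
    qed
    then show ?thesis
      using L2T_mult_integrable[OF k kop_L2T(1)[OF T0' g1 k]] L2T_mult_integrable[OF k kop_L2T(1)[OF T0' g2 k]]
      by simp
  qed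
  ultimately have "(\<integral>t. (\<integral>s. (G t s + G s t) * k s * k t \<partial>LT T) \<partial>LT T) = (\<integral>t. (\<integral>s. (G1 t s + G1 s t) * k s * k t \<partial>LT T) \<partial>LT T)"
    by (intro int_cong_AE_LT)
  then show ?thesis using posG by simp
qed

theorem lemma7p3:
  fixes T lam \<phi> \<rho> :: real and G :: "real \<Rightarrow> real \<Rightarrow> real"
  assumes "T > 0" and "lam > 0" and "\<phi> \<ge> 0" and "\<rho> \<ge> 0"
    and "kernel_class T G"
  shows "(SUP t\<in>{0..T}. op_norm2 T (Gamma_inv T lam \<phi> \<rho> G t)) < \<infinity>"
proof -
  obtain G1 S1 S2 where G1m: "(\<lambda>(s,u). G1 s u) \<in> borel_measurable borel" and S: "S1 \<ge> 0" "S2 \<ge> 0"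
    and rowb: "\<forall>s. (\<integral>\<^sup>+u. ennreal ((G1 s u)\<^sup>2) \<partial>LT T) \<le> ennreal S1"
    and colb: "\<forall>u. (\<integral>\<^sup>+s. ennreal ((G1 s u)\<^sup>2) \<partial>LT T) \<le> ennreal S2"
    and volt: "\<forall>s u. G1 s u \<noteq> 0 \<longrightarrow> u < s"
    and ae1: "AE s in LT T. AE u in LT T. G s u = G1 s u"
    and ae2: "AE u in LT T. AE s in LT T. G s u = G1 s u"
    using G1_exists[OF assms(1,5)] by blast
  have pos: "\<And>k. L2T T k \<Longrightarrow> 0 \<le> (\<integral>t. (\<integral>s. (G1 t s + G1 s t) * k s * k t \<partial>LT T) \<partial>LT T)"
    using pos_transfer[OF assms(1,5) G1m _ S(1) _ S(2) ae1 ae2] rowb colb by blast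
  have DSt: "DS T lam \<phi> \<rho> G1 S1 S2"
    using assms(1-4) G1m S rowb colb volt pos by unfold_locales auto
  define C where "C = DS.CC T lam \<phi>"
  have bnd: "op_norm2 T (Gamma_inv T lam \<phi> \<rho> G t) \<le> ennreal C" for t
    unfolding op_norm2_def
  proof (rule SUP_least)
    fix fg assume fg: "fg \<in> {fg. L2T T (fst fg) \<and> L2T T (snd fg) \<and> L2norm2 T fg \<le> 1}"
    obtain f1 f2 where fge: "fg = (f1, f2)" by (cases fg)
    have f1: "L2T T f1" and f2: "L2T T f2" and nn: "sqrt ((nrm T f1)\<^sup>2 + (nrm T f2)\<^sup>2) \<le> 1"
      using fg unfolding fge L2norm2_def by (auto simp: nrm_sq)
    have n1: "nrm T f1 \<le> 1"
    proof -
      have "nrm T f1 = sqrt ((nrm T f1)\<^sup>2)" by (simp add: nrm_nonneg)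
      also have "\<dots> \<le> sqrt ((nrm T f1)\<^sup>2 + (nrm T f2)\<^sup>2)" by simp
      finally show ?thesis using nn by linarith
    qed
    have n2: "nrm T f2 \<le> 1"
    proof -
      have "nrm T f2 = sqrt ((nrm T f2)\<^sup>2)" by (simp add: nrm_nonneg)
      also have "\<dots> \<le> sqrt ((nrm T f1)\<^sup>2 + (nrm T f2)\<^sup>2)" by simp
      finally show ?thesis using nn by linarith
    qed
    have "L2norm2 T (Gamma_inv T lam \<phi> \<rho> G t (f1, f2)) \<le> C"
      unfolding C_def by (rule DS.Gamma_bnd[OF DSt ae1 ae2 f1 f2 n1 n2])
    then show "ennreal (L2norm2 T (Gamma_inv T lam \<phi> \<rho> G t fg)) \<le> ennreal C"
      unfolding fge by (rule ennreal_leI)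
  qed
  have "(SUP t\<in>{0..T}. op_norm2 T (Gamma_inv T lam \<phi> \<rho> G t)) \<le> ennreal C"
    by (rule SUP_least) (rule bnd)
  also have "\<dots> < \<infinity>" by simp
  finally show ?thesis .
qed


end
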